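(* Consider the linear Gaussian pairwise Markov model $$\alpha_{k+1}=T\alpha_k+By_{k-1}+\eta_k,\qquad y_k=Z\alpha_k+\beta y_{k-1}+\varepsilon_k,\qquad \begin{bmatrix}\eta_k\\ \varepsilon_k\end{bmatrix}\sim\mathcal N\!\left(0,\begin{bmatrix}Q&S\\ S^\top&H\end{bmatrix}\right),$$ $\alpha_0\sim\mathcal N(\bar\alpha_0,\Pi_0)$, $\Pi_0>0$, $H>0$, where $T,B,Z,\beta,Q,S,H,\bar\alpha_0,\Pi_0$ depend differentiably on $\theta\in\mathbb R^p$ while the observations $y_k$ (including the given initial values used below) do not depend on $\theta$. Write $\partial_iA:=\partial A/\partial\theta_i$, $\overline T=T-SH^{-1}Z$, $\overline B=B-SH^{-1}\beta$, $\overline Q=Q-SH^{-1}S^\top$. Algorithm 2a (UD-based pairwise Kalman filter): factor $\Pi_0=\bar U_{\Pi_0}D_{\Pi_0}\bar U_{\Pi_0}^\top$, $H=\bar U_HD_H\bar U_H^\top$, $\overline Q=\bar U_{\overline Q}D_{\overline Q}\bar U_{\overline Q}^\top$; set $\hat\alpha_{0|0}=\bar\alpha_0$, $\bar U_{P_{0|0}}=\bar U_{\Pi_0}$, $D_{P_{0|0}}=D_{\Pi_0}$; for $k=0,\dots,N-1$: $\hat\alpha_{k+1|k}=\overline T\hat\alpha_{k|k}+\overline By_{k-1}+SH^{-1}y_k$; MWGS on $\mathbb A^\top=[\overline T\bar U_{P_{k|k}}\ \bar U_{\overline Q}]$, $\mathbb D_A=D_{P_{k|k}}\oplus D_{\overline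 Q}$ gives $\mathbb R=\bar U_{P_{k+1|k}}$, $\mathbb D_R=D_{P_{k+1|k}}$; MWGS on $\mathbb A^\top=\begin{bmatrix}\bar U_{P_{k+1|k}}&0\\ Z\bar U_{P_{k+1|k}}&\bar U_H\end{bmatrix}$, $\mathbb D_A=D_{P_{k+1|k}}\oplus D_H$ gives $\mathbb R=\begin{bmatrix}\bar U_{P_{k+1|k+1}}&\bar K_{k+1}^u\\0&\bar U_{R_{e,k+1}}\end{bmatrix}$, $\mathbb D_R=D_{P_{k+1|k+1}}\oplus D_{R_{e,k+1}}$; $e_{k+1}=y_{k+1}-Z\hat\alpha_{k+1|k}-\beta y_k$, $\bar e_{k+1}=\bar U_{R_{e,k+1}}^{-1}e_{k+1}$, $\hat\alpha_{k+1|k+1}=\hat\alpha_{k+1|k}+\bar K_{k+1}^u\bar e_{k+1}$. Algorithm 2b (differentiated UD-based pairwise Kalman filter): for each $i=1,\dots,p$, in addition to Algorithm 2a, it initializes $\partial_i\bar U_{P_{0|0}}=\partial_i\bar U_{\Pi_0}$, $\partial_iD_{P_{0|0}}=\partial_iD_{\Pi_0}$, $\partial_i\hat\alpha_{0|0}=\partial_i\bar\alpha_0$ (using $\partial_i\overline T,\partial_i\overline B,\partial_i\overline Q$ and derivatives of the factors of $\overline Q$, $H$), and for $k=0,\dots,N-1$ computes: (a) $\partial_i\hat\alpha_{k+1|k}=(\partial_i\overline T)\hat\alpha_{k|k}+\overline T\,\partial_i\hat\alpha_{k|k}+(\partial_i\overline B)y_{k-1}+(\partial_iS)H^{-1}y_k-SH^{-1}(\partial_iH)H^{-1}y_k$;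 (b) in both MWGS steps, forms the pre-arrays of Algorithm 2a and their derivatives $\partial_i\mathbb A,\partial_i\mathbb D_A$, applies the Diff. UD scheme below, and reads off $\partial_i\bar U_{P_{k+1|k}},\partial_iD_{P_{k+1|k}},\partial_i\bar U_{P_{k+1|k+1}},\partial_iD_{P_{k+1|k+1}},\partial_i\bar U_{R_{e,k+1}},\partial_iD_{R_{e,k+1}},\partial_i\bar K_{k+1}^u$ from the positions of the corresponding undifferentiated blocks; (c) $\partial_i\bar e_{k+1}=-\bar U_{R_{e,k+1}}^{-1}(\partial_i\bar U_{R_{e,k+1}})\bar U_{R_{e,k+1}}^{-1}e_{k+1}-\bar U_{R_{e,k+1}}^{-1}\big[(\partial_iZ)\hat\alpha_{k+1|k}+Z\,\partial_i\hat\alpha_{k+1|k}+(\partial_i\beta)y_k\big]$; (d) $\partial_i\hat\alpha_{k+1|k+1}=\partial_i\hat\alpha_{k+1|k}+(\partial_i\bar K_{k+1}^u)\bar e_{k+1}+\bar K_{k+1}^u\,\partial_i\bar e_{k+1}$. Diff. UD scheme with inputs $\mathbb A,\mathbb D_A,\partial_i\mathbb A,\partial_i\mathbb D_A$: apply MWGS to get $\mathfrak W,\mathbb R,\mathbb D_R$; $M_0=\mathfrak W^\top\mathbb D_A(\partial_i\mathbb A)\mathbb R^{-\top}=\bar L_0+D_0+\bar U_0$ and $M_2=\mathfrak W^\top(\partial_i\mathbb D_A)\mathfrak W=\bar L_2+D_2+\bar U_2$ (strictly lower, diagonal, strictly upper parts); output $\partial_i\mathbb R=\mathbb R(\bar L_0^\top+\bar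 U_0+\bar U_2)\mathbb D_R^{-1}$, $\partial_i\mathbb D_R=2D_0+D_2$. Then Algorithm 2b computes the filter sensitivities of Algorithm 2a correctly: for every $k$ and $i$, the quantities it produces as $\partial_i\hat\alpha_{k+1|k}$, $\partial_i\bar U_{P_{k+1|k}}$, $\partial_iD_{P_{k+1|k}}$, $\partial_i\bar U_{P_{k+1|k+1}}$, $\partial_iD_{P_{k+1|k+1}}$, $\partial_i\bar U_{R_{e,k+1}}$, $\partial_iD_{R_{e,k+1}}$, $\partial_i\bar K_{k+1}^u$, $\partial_i\bar e_{k+1}$, $\partial_i\hat\alpha_{k+1|k+1}$ equal the partial derivatives with respect to $\theta_i$ of the corresponding quantities of Algorithm 2a, regarded as functions of $\theta$.
   Context: $UDU^\top$ factorization: $P=\bar U_PD_P\bar U_P^\top$ with $\bar U_P$ unit upper triangular and $D_P$ diagonal. $A\oplus B:=\mathrm{diag}\{A,B\}$. MWGS: given $\mathbb A\in\mathbb R^{r\times s}$ ($r\ge s$) and diagonal $\mathbb D_A>0$, it returns $\mathfrak W\in\mathbb R^{r\times s}$, a unit upper triangular $\mathbb R\in\mathbb R^{s\times s}$ and a diagonal $\mathbb D_R$ with $\mathbb A^\top=\mathbb R\mathfrak W^\top$ and $\mathfrak W^\top\mathbb D_A\mathfrak W=\mathbb D_R$. It is assumed that every MWGS call is well defined (with $\mathbb D_R$ invertible) and that all quantities are differentiable in $\theta$. *)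

theory Defs
  imports "Jordan_Normal_Form.Matrix"
begin

definition minv :: "real mat \<Rightarrow> real mat" where
  "minv A = (SOME B. B \<in> carrier_mat (dim_col A) (dim_row A) \<and> inverts_mat A B \<and> inverts_mat B A)"

definition unit_upper :: "real mat \<Rightarrow> bool" where
  "unit_upper U \<longleftrightarrow> square_mat U \<and> upper_triangular U \<and> (\<forall>j<dim_row U. U $$ (j,j) = 1)"

definition pos_def :: "real mat \<Rightarrow> bool" where
  "pos_def A \<longleftrightarrow> (\<exists>n. A \<in> carrier_mat n n \<and> A\<^sup>T = A \<and>
     (\<forall>x\<in>carrier_vec n. x \<noteq> 0\<^sub>v n \<longrightarrow> x \<bullet> (A *\<^sub>v x) > 0))"

definition pos_semidef :: "real mat \<Rightarrow> bool" where
  "pos_semidef A \<longleftrightarrow> (\<exists>n. A \<in> carrier_mat n n \<and> A\<^sup>T = A \<and>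
     (\<forall>x\<in>carrier_vec n. x \<bullet> (A *\<^sub>v x) \<ge> 0))"

definition ud_fact :: "real mat \<Rightarrow> real mat \<Rightarrow> real mat \<Rightarrow> bool" where
  "ud_fact P U D \<longleftrightarrow> (\<exists>n. P \<in> carrier_mat n n \<and> U \<in> carrier_mat n n \<and> D \<in> carrier_mat n n \<and>
     unit_upper U \<and> diagonal_mat D \<and> P = U * D * U\<^sup>T)"

text \<open>Direct sum diag(A,B) and horizontal concatenation [A B].\<close>
definition bdiag :: "real mat \<Rightarrow> real mat \<Rightarrow> real mat" where
  "bdiag A B = four_block_mat A (0\<^sub>m (dim_row A) (dim_col B)) (0\<^sub>m (dim_row B) (dim_col A)) B"

definition hcat :: "real mat \<Rightarrow> real mat \<Rightarrow> real mat" where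
  "hcat A B = four_block_mat A B (0\<^sub>m 0 (dim_col A)) (0\<^sub>m 0 (dim_col B))"

definition slow :: "real mat \<Rightarrow> real mat" where
  "slow M = mat (dim_row M) (dim_col M) (\<lambda>(r,c). if c < r then M $$ (r,c) else 0)"
definition sdiag :: "real mat \<Rightarrow> real mat" where
  "sdiag M = mat (dim_row M) (dim_col M) (\<lambda>(r,c). if c = r then M $$ (r,c) else 0)"
definition supp :: "real mat \<Rightarrow> real mat" where
  "supp M = mat (dim_row M) (dim_col M) (\<lambda>(r,c). if r < c then M $$ (r,c) else 0)"

definition mwgs_spec :: "real mat \<Rightarrow> real mat \<Rightarrow> real mat \<Rightarrow> real mat \<Rightarrow> real mat \<Rightarrow> bool" where
  "mwgs_spec A DA W R DR \<longleftrightarrow>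
     (let r = dim_row A; s = dim_col A in
      s \<le> r \<and> DA \<in> carrier_mat r r \<and> diagonal_mat DA \<and> (\<forall>j<r. DA $$ (j,j) > 0) \<and>
      W \<in> carrier_mat r s \<and> R \<in> carrier_mat s s \<and> unit_upper R \<and>
      DR \<in> carrier_mat s s \<and> diagonal_mat DR \<and>
      A\<^sup>T = R * W\<^sup>T \<and> W\<^sup>T * DA * W = DR)"

definition mwgs_ok :: "real mat \<Rightarrow> real mat \<Rightarrow> bool" where
  "mwgs_ok A DA \<longleftrightarrow> (\<exists>W R DR. mwgs_spec A DA W R DR \<and> (\<forall>j<dim_col A. DR $$ (j,j) \<noteq> 0))"

definition mwgs :: "real mat \<Rightarrow> real mat \<Rightarrow> real mat \<times> real mat \<times> real mat" where
  "mwgs A DA = (SOME (W,R,DR). mwgs_spec A DA W R DR \<and> (\<forall>j<dim_col A. DR $$ (j,j) \<noteq> 0))"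

definition diff_ud :: "real mat \<Rightarrow> real mat \<Rightarrow> real mat \<Rightarrow> real mat \<Rightarrow> real mat \<times> real mat" where
  "diff_ud A DA dA dDA = (let (W,R,DR) = mwgs A DA;
      M0 = W\<^sup>T * DA * dA * (minv R)\<^sup>T;
      M2 = W\<^sup>T * dDA * W
    in (R * ((slow M0)\<^sup>T + supp M0 + supp M2) * minv DR, 2 \<cdot>\<^sub>m sdiag M0 + sdiag M2))"

text \<open>Model matrices together with the chosen UD factors of Pi_0, H and Qbar.\<close>
record kf_par =
  pT :: "real mat" pB :: "real mat" pZ :: "real mat" pbeta :: "real mat"
  pQ :: "real mat" pS :: "real mat" pH :: "real mat"
  pa0 :: "real vec" pPi0 :: "real mat"
  pUPi :: "real mat" pDPi :: "real mat"
  pUH :: "real mat" pDH :: "real mat"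
  pUQ :: "real mat" pDQ :: "real mat"

definition Hinv :: "kf_par \<Rightarrow> real mat" where "Hinv p = minv (pH p)"
definition Tbar :: "kf_par \<Rightarrow> real mat" where "Tbar p = pT p - pS p * Hinv p * pZ p"
definition Bbar :: "kf_par \<Rightarrow> real mat" where "Bbar p = pB p - pS p * Hinv p * pbeta p"
definition Qbar :: "kf_par \<Rightarrow> real mat" where "Qbar p = pQ p - pS p * Hinv p * (pS p)\<^sup>T"

text \<open>Derivatives (d = record of partial derivatives of the parameters) of derived quantities.\<close>
definition dHinv :: "kf_par \<Rightarrow> kf_par \<Rightarrow> real mat" where
  "dHinv p d = (-1) \<cdot>\<^sub>m (Hinv p * pH d * Hinv p)"
definition dTbar :: "kf_par \<Rightarrow> kf_par \<Rightarrow> real mat" where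
  "dTbar p d = pT d - (pS d * Hinv p * pZ p + pS p * dHinv p d * pZ p + pS p * Hinv p * pZ d)"
definition dBbar :: "kf_par \<Rightarrow> kf_par \<Rightarrow> real mat" where
  "dBbar p d = pB d - (pS d * Hinv p * pbeta p + pS p * dHinv p d * pbeta p + pS p * Hinv p * pbeta d)"

definition pre1 :: "kf_par \<Rightarrow> real mat \<Rightarrow> real mat" where
  "pre1 p U = (hcat (Tbar p * U) (pUQ p))\<^sup>T"
definition pre2 :: "kf_par \<Rightarrow> real mat \<Rightarrow> real mat" where
  "pre2 p U = (four_block_mat U (0\<^sub>m (dim_row U) (dim_col (pUH p))) (pZ p * U) (pUH p))\<^sup>T"

record kf_out =
  o_apred :: "real vec" o_W1 :: "real mat" o_UPp :: "real mat" o_DPp :: "real mat"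
  o_W2 :: "real mat" o_UPu :: "real mat" o_DPu :: "real mat" o_URe :: "real mat" o_DRe :: "real mat"
  o_K :: "real mat" o_e :: "real vec" o_eb :: "real vec" o_aupd :: "real vec"

text \<open>One step k of Algorithm 2a, from state (alpha_{k|k}, U_{P_{k|k}}, D_{P_{k|k}}).
  Observations are indexed by integers (y (-1) is the given initial value).\<close>
definition kf_step :: "kf_par \<Rightarrow> (int \<Rightarrow> real vec) \<Rightarrow> nat \<Rightarrow> real vec \<times> real mat \<times> real mat \<Rightarrow> kf_out" where
  "kf_step p y k st = (case st of (a, U, D) \<Rightarrow>
    let ap = Tbar p *\<^sub>v a + Bbar p *\<^sub>v y (int k - 1) + (pS p * Hinv p) *\<^sub>v y (int k);
        (W1, R1, DR1) = mwgs (pre1 p U) (bdiag D (pDQ p));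
        (W2, R2, DR2) = mwgs (pre2 p R1) (bdiag DR1 (pDH p));
        (UPu, K, _, URe) = split_block R2 (dim_row R1) (dim_row R1);
        (DPu, _, _, DRe) = split_block DR2 (dim_row R1) (dim_row R1);
        e = y (int k + 1) - pZ p *\<^sub>v ap - pbeta p *\<^sub>v y (int k);
        eb = minv URe *\<^sub>v e;
        au = ap + K *\<^sub>v eb
    in \<lparr>o_apred = ap, o_W1 = W1, o_UPp = R1, o_DPp = DR1, o_W2 = W2, o_UPu = UPu, o_DPu = DPu,
        o_URe = URe, o_DRe = DRe, o_K = K, o_e = e, o_eb = eb, o_aupd = au\<rparr>)"

fun kf_filt :: "kf_par \<Rightarrow> (int \<Rightarrow> real vec) \<Rightarrow> nat \<Rightarrow> real vec \<times> real mat \<times> real mat" where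
  "kf_filt p y 0 = (pa0 p, pUPi p, pDPi p)"
| "kf_filt p y (Suc k) = (let ou = kf_step p y k (kf_filt p y k) in (o_aupd ou, o_UPu ou, o_DPu ou))"

definition kf_out :: "kf_par \<Rightarrow> (int \<Rightarrow> real vec) \<Rightarrow> nat \<Rightarrow> kf_out" where
  "kf_out p y k = kf_step p y k (kf_filt p y k)"

definition mwgs_calls_ok :: "kf_par \<Rightarrow> (int \<Rightarrow> real vec) \<Rightarrow> nat \<Rightarrow> bool" where
  "mwgs_calls_ok p y N \<longleftrightarrow> (\<forall>k<N. case kf_filt p y k of (a, U, D) \<Rightarrow>
      mwgs_ok (pre1 p U) (bdiag D (pDQ p)) \<and>
      (case mwgs (pre1 p U) (bdiag D (pDQ p)) of (W1, R1, DR1) \<Rightarrow>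
         mwgs_ok (pre2 p R1) (bdiag DR1 (pDH p))))"

record kf_dout =
  d_apred :: "real vec" d_UPp :: "real mat" d_DPp :: "real mat"
  d_UPu :: "real mat" d_DPu :: "real mat" d_URe :: "real mat" d_DRe :: "real mat"
  d_K :: "real mat" d_eb :: "real vec" d_aupd :: "real vec"

definition kf_dstep :: "kf_par \<Rightarrow> kf_par \<Rightarrow> (int \<Rightarrow> real vec) \<Rightarrow> nat \<Rightarrow>
    real vec \<times> real mat \<times> real mat \<Rightarrow> real vec \<times> real mat \<times> real mat \<Rightarrow> kf_dout" where
  "kf_dstep p d y k st dst = (case st of (a, U, D) \<Rightarrow> case dst of (da, dU, dD) \<Rightarrow>
    let ou = kf_step p y k st;
        dap = dTbar p d *\<^sub>v a + Tbar p *\<^sub>v da + dBbar p d *\<^sub>v y (int k - 1)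
              + (pS d * Hinv p) *\<^sub>v y (int k) - (pS p * Hinv p * pH d * Hinv p) *\<^sub>v y (int k);
        A1 = pre1 p U; DA1 = bdiag D (pDQ p);
        dA1 = (hcat (dTbar p d * U + Tbar p * dU) (pUQ d))\<^sup>T; dDA1 = bdiag dD (pDQ d);
        (dR1, dDR1) = diff_ud A1 DA1 dA1 dDA1;
        R1 = o_UPp ou; DR1 = o_DPp ou;
        A2 = pre2 p R1; DA2 = bdiag DR1 (pDH p);
        dA2 = (four_block_mat dR1 (0\<^sub>m (dim_row R1) (dim_col (pUH p)))
                 (pZ d * R1 + pZ p * dR1) (pUH d))\<^sup>T;
        dDA2 = bdiag dDR1 (pDH d);
        (dR2, dDR2) = diff_ud A2 DA2 dA2 dDA2;
        (dUPu, dK, _, dURe) = split_block dR2 (dim_row R1) (dim_row R1);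
        (dDPu, _, _, dDRe) = split_block dDR2 (dim_row R1) (dim_row R1);
        URe = o_URe ou; K = o_K ou;
        deb = (-1) \<cdot>\<^sub>v ((minv URe * dURe * minv URe) *\<^sub>v o_e ou)
              - minv URe *\<^sub>v (pZ d *\<^sub>v o_apred ou + pZ p *\<^sub>v dap + pbeta d *\<^sub>v y (int k));
        dau = dap + dK *\<^sub>v o_eb ou + K *\<^sub>v deb
    in \<lparr>d_apred = dap, d_UPp = dR1, d_DPp = dDR1, d_UPu = dUPu, d_DPu = dDPu,
        d_URe = dURe, d_DRe = dDRe, d_K = dK, d_eb = deb, d_aupd = dau\<rparr>)"

fun kf_dfilt :: "kf_par \<Rightarrow> kf_par \<Rightarrow> (int \<Rightarrow> real vec) \<Rightarrow> nat \<Rightarrow> real vec \<times> real mat \<times> real mat" where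
  "kf_dfilt p d y 0 = (pa0 d, pUPi d, pDPi d)"
| "kf_dfilt p d y (Suc k) = (let ou = kf_dstep p d y k (kf_filt p y k) (kf_dfilt p d y k)
      in (d_aupd ou, d_UPu ou, d_DPu ou))"

definition kf_dout :: "kf_par \<Rightarrow> kf_par \<Rightarrow> (int \<Rightarrow> real vec) \<Rightarrow> nat \<Rightarrow> kf_dout" where
  "kf_dout p d y k = kf_dstep p d y k (kf_filt p y k) (kf_dfilt p d y k)"

definition mat_pderiv :: "(('p \<Rightarrow> real) \<Rightarrow> real mat) \<Rightarrow> ('p \<Rightarrow> real) \<Rightarrow> 'p \<Rightarrow> real mat \<Rightarrow> bool" where
  "mat_pderiv F \<theta> i G \<longleftrightarrow> G \<in> carrier_mat (dim_row (F \<theta>)) (dim_col (F \<theta>)) \<and>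
     (\<forall>r<dim_row (F \<theta>). \<forall>c<dim_col (F \<theta>).
        ((\<lambda>x. F (\<theta>(i := x)) $$ (r,c)) has_real_derivative G $$ (r,c)) (at (\<theta> i)))"

definition vec_pderiv :: "(('p \<Rightarrow> real) \<Rightarrow> real vec) \<Rightarrow> ('p \<Rightarrow> real) \<Rightarrow> 'p \<Rightarrow> real vec \<Rightarrow> bool" where
  "vec_pderiv F \<theta> i g \<longleftrightarrow> g \<in> carrier_vec (dim_vec (F \<theta>)) \<and>
     (\<forall>r<dim_vec (F \<theta>). ((\<lambda>x. F (\<theta>(i := x)) $ r) has_real_derivative g $ r) (at (\<theta> i)))"

definition mat_pdiff :: "(('p \<Rightarrow> real) \<Rightarrow> real mat) \<Rightarrow> ('p \<Rightarrow> real) \<Rightarrow> 'p \<Rightarrow> bool" where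
  "mat_pdiff F \<theta> i \<longleftrightarrow> (\<exists>G. mat_pderiv F \<theta> i G)"

definition vec_pdiff :: "(('p \<Rightarrow> real) \<Rightarrow> real vec) \<Rightarrow> ('p \<Rightarrow> real) \<Rightarrow> 'p \<Rightarrow> bool" where
  "vec_pdiff F \<theta> i \<longleftrightarrow> (\<exists>g. vec_pderiv F \<theta> i g)"

definition kf_out_pdiff :: "(('p \<Rightarrow> real) \<Rightarrow> kf_out) \<Rightarrow> ('p \<Rightarrow> real) \<Rightarrow> 'p \<Rightarrow> bool" where
  "kf_out_pdiff F \<theta> i \<longleftrightarrow>
     vec_pdiff (\<lambda>t. o_apred (F t)) \<theta> i \<and> mat_pdiff (\<lambda>t. o_W1 (F t)) \<theta> i \<and>
     mat_pdiff (\<lambda>t. o_UPp (F t)) \<theta> i \<and> mat_pdiff (\<lambda>t. o_DPp (F t)) \<theta> i \<and>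
     mat_pdiff (\<lambda>t. o_W2 (F t)) \<theta> i \<and> mat_pdiff (\<lambda>t. o_UPu (F t)) \<theta> i \<and>
     mat_pdiff (\<lambda>t. o_DPu (F t)) \<theta> i \<and> mat_pdiff (\<lambda>t. o_URe (F t)) \<theta> i \<and>
     mat_pdiff (\<lambda>t. o_DRe (F t)) \<theta> i \<and> mat_pdiff (\<lambda>t. o_K (F t)) \<theta> i \<and>
     vec_pdiff (\<lambda>t. o_e (F t)) \<theta> i \<and> vec_pdiff (\<lambda>t. o_eb (F t)) \<theta> i \<and>
     vec_pdiff (\<lambda>t. o_aupd (F t)) \<theta> i"

definition par_pderiv :: "(('p \<Rightarrow> real) \<Rightarrow> kf_par) \<Rightarrow> ('p \<Rightarrow> real) \<Rightarrow> 'p \<Rightarrow> kf_par \<Rightarrow> bool" where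
  "par_pderiv P \<theta> i d \<longleftrightarrow>
     mat_pderiv (\<lambda>t. pT (P t)) \<theta> i (pT d) \<and> mat_pderiv (\<lambda>t. pB (P t)) \<theta> i (pB d) \<and>
     mat_pderiv (\<lambda>t. pZ (P t)) \<theta> i (pZ d) \<and> mat_pderiv (\<lambda>t. pbeta (P t)) \<theta> i (pbeta d) \<and>
     mat_pderiv (\<lambda>t. pQ (P t)) \<theta> i (pQ d) \<and> mat_pderiv (\<lambda>t. pS (P t)) \<theta> i (pS d) \<and>
     mat_pderiv (\<lambda>t. pH (P t)) \<theta> i (pH d) \<and> vec_pderiv (\<lambda>t. pa0 (P t)) \<theta> i (pa0 d) \<and>
     mat_pderiv (\<lambda>t. pPi0 (P t)) \<theta> i (pPi0 d) \<and>
     mat_pderiv (\<lambda>t. pUPi (P t)) \<theta> i (pUPi d) \<and> mat_pderiv (\<lambda>t. pDPi (P t)) \<theta> i (pDPi d) \<and>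
     mat_pderiv (\<lambda>t. pUH (P t)) \<theta> i (pUH d) \<and> mat_pderiv (\<lambda>t. pDH (P t)) \<theta> i (pDH d) \<and>
     mat_pderiv (\<lambda>t. pUQ (P t)) \<theta> i (pUQ d) \<and> mat_pderiv (\<lambda>t. pDQ (P t)) \<theta> i (pDQ d)"

definition model_ok :: "nat \<Rightarrow> nat \<Rightarrow> kf_par \<Rightarrow> bool" where
  "model_ok n m p \<longleftrightarrow>
     pT p \<in> carrier_mat n n \<and> pB p \<in> carrier_mat n m \<and> pZ p \<in> carrier_mat m n \<and>
     pbeta p \<in> carrier_mat m m \<and> pQ p \<in> carrier_mat n n \<and> pS p \<in> carrier_mat n m \<and>
     pH p \<in> carrier_mat m m \<and> pa0 p \<in> carrier_vec n \<and> pPi0 p \<in> carrier_mat n n \<and>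
     pos_semidef (four_block_mat (pQ p) (pS p) (pS p)\<^sup>T (pH p)) \<and>
     pos_def (pPi0 p) \<and> pos_def (pH p) \<and>
     ud_fact (pPi0 p) (pUPi p) (pDPi p) \<and> ud_fact (pH p) (pUH p) (pDH p) \<and>
     ud_fact (Qbar p) (pUQ p) (pDQ p)"

end

theory Submission
  imports Defs "Jordan_Normal_Form.Determinant"
begin


definition mD :: "(real \<Rightarrow> real mat) \<Rightarrow> real mat \<Rightarrow> nat \<Rightarrow> nat \<Rightarrow> real \<Rightarrow> bool" where
  "mD F G nr nc x0 \<longleftrightarrow> (\<forall>x. F x \<in> carrier_mat nr nc) \<and> G \<in> carrier_mat nr nc \<and>
     (\<forall>r<nr. \<forall>c<nc. ((\<lambda>x. F x $$ (r,c)) has_real_derivative G $$ (r,c)) (at x0))"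

definition vD :: "(real \<Rightarrow> real vec) \<Rightarrow> real vec \<Rightarrow> nat \<Rightarrow> real \<Rightarrow> bool" where
  "vD F g n x0 \<longleftrightarrow> (\<forall>x. F x \<in> carrier_vec n) \<and> g \<in> carrier_vec n \<and>
     (\<forall>r<n. ((\<lambda>x. F x $ r) has_real_derivative g $ r) (at x0))"

lemma mD_carrier: "mD F G nr nc x0 \<Longrightarrow> F x \<in> carrier_mat nr nc" "mD F G nr nc x0 \<Longrightarrow> G \<in> carrier_mat nr nc"
  by (auto simp: mD_def)
lemma vD_carrier: "vD F G n x0 \<Longrightarrow> F x \<in> carrier_vec n" "vD F G n x0 \<Longrightarrow> G \<in> carrier_vec n"
  by (auto simp: vD_def)

lemma mD_unique: "mD F G1 nr nc x0 \<Longrightarrow> mD F G2 nr nc x0 \<Longrightarrow> G1 = G2"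
  unfolding mD_def by (auto intro!: eq_matI DERIV_unique)
lemma vD_unique: "vD F G1 n x0 \<Longrightarrow> vD F G2 n x0 \<Longrightarrow> G1 = G2"
  unfolding vD_def by (auto intro!: eq_vecI DERIV_unique)

lemma mD_const: "C \<in> carrier_mat nr nc \<Longrightarrow> mD (\<lambda>x. C) (0\<^sub>m nr nc) nr nc x0"
  unfolding mD_def by auto
lemma vD_const: "C \<in> carrier_vec n \<Longrightarrow> vD (\<lambda>x. C) (0\<^sub>v n) n x0"
  unfolding vD_def by auto

lemma mD_add: assumes "mD F G nr nc x0" "mD H K nr nc x0" shows "mD (\<lambda>x. F x + H x) (G + K) nr nc x0"
proof -
  have c: "\<And>x. F x \<in> carrier_mat nr nc" "\<And>x. H x \<in> carrier_mat nr nc" using assms by (auto simp: mD_def)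
  show ?thesis using assms unfolding mD_def
  proof (intro conjI allI impI)
    fix r c assume rc: "r < nr" "c < nc"
    have "(\<lambda>x. (F x + H x) $$ (r,c)) = (\<lambda>x. F x $$ (r,c) + H x $$ (r,c))" using rc by (simp add: carrier_matD[OF c(1)] carrier_matD[OF c(2)])
    then show "((\<lambda>x. (F x + H x) $$ (r,c)) has_real_derivative (G + K) $$ (r,c)) (at x0)"
      using assms rc unfolding mD_def by (auto intro!: derivative_intros)
  qed (auto intro: c)
qed
lemma mD_minus: assumes "mD F G nr nc x0" "mD H K nr nc x0" shows "mD (\<lambda>x. F x - H x) (G - K) nr nc x0"
proof -
  have c: "\<And>x. F x \<in> carrier_mat nr nc" "\<And>x. H x \<in> carrier_mat nr nc" using assms by (auto simp: mD_def)
  show ?thesis using assms unfolding mD_def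
  proof (intro conjI allI impI)
    fix r c assume rc: "r < nr" "c < nc"
    have "(\<lambda>x. (F x - H x) $$ (r,c)) = (\<lambda>x. F x $$ (r,c) - H x $$ (r,c))" using rc by (simp add: carrier_matD[OF c(1)] carrier_matD[OF c(2)])
    then show "((\<lambda>x. (F x - H x) $$ (r,c)) has_real_derivative (G - K) $$ (r,c)) (at x0)"
      using assms rc unfolding mD_def by (auto intro!: derivative_intros)
  qed (auto intro: c minus_carrier_mat)
qed
lemma mD_smult: assumes "mD F G nr nc x0" shows "mD (\<lambda>x. a \<cdot>\<^sub>m F x) (a \<cdot>\<^sub>m G) nr nc x0"
proof -
  have c: "\<And>x. F x \<in> carrier_mat nr nc" using assms by (auto simp: mD_def)
  show ?thesis using assms unfolding mD_def
  proof (intro conjI allI impI)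
    fix r c assume rc: "r < nr" "c < nc"
    have "(\<lambda>x. (a \<cdot>\<^sub>m F x) $$ (r,c)) = (\<lambda>x. a * F x $$ (r,c))" using rc by (simp add: carrier_matD[OF c(1)])
    then show "((\<lambda>x. (a \<cdot>\<^sub>m F x) $$ (r,c)) has_real_derivative (a \<cdot>\<^sub>m G) $$ (r,c)) (at x0)"
      using assms rc unfolding mD_def by (auto intro!: DERIV_cmult)
  qed (auto intro: c)
qed
lemma mD_transpose: assumes "mD F G nr nc x0" shows "mD (\<lambda>x. (F x)\<^sup>T) (G\<^sup>T) nc nr x0"
proof -
  have c: "\<And>x. F x \<in> carrier_mat nr nc" using assms by (auto simp: mD_def)
  show ?thesis using assms unfolding mD_def
  proof (intro conjI allI impI)
    fix r c assume rc: "r < nc" "c < nr"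
    have "(\<lambda>x. (F x)\<^sup>T $$ (r,c)) = (\<lambda>x. F x $$ (c,r))" using rc by (simp add: carrier_matD[OF c(1)])
    then show "((\<lambda>x. (F x)\<^sup>T $$ (r,c)) has_real_derivative G\<^sup>T $$ (r,c)) (at x0)"
      using assms rc unfolding mD_def by (auto intro!: derivative_intros)
  qed (auto intro: c)
qed
lemma vD_add: assumes "vD F G n x0" "vD H K n x0" shows "vD (\<lambda>x. F x + H x) (G + K) n x0"
proof -
  have c: "\<And>x. F x \<in> carrier_vec n" "\<And>x. H x \<in> carrier_vec n" using assms by (auto simp: vD_def)
  show ?thesis using assms unfolding vD_def
  proof (intro conjI allI impI)
    fix r assume rc: "r < n"
    have "(\<lambda>x. (F x + H x) $ r) = (\<lambda>x. F x $ r + H x $ r)" using rc by (simp add: carrier_vecD[OF c(1)] carrier_vecD[OF c(2)])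
    then show "((\<lambda>x. (F x + H x) $ r) has_real_derivative (G + K) $ r) (at x0)"
      using assms rc unfolding vD_def by (auto intro!: derivative_intros)
  qed (auto intro: c)
qed
lemma vD_minus: assumes "vD F G n x0" "vD H K n x0" shows "vD (\<lambda>x. F x - H x) (G - K) n x0"
proof -
  have c: "\<And>x. F x \<in> carrier_vec n" "\<And>x. H x \<in> carrier_vec n" using assms by (auto simp: vD_def)
  show ?thesis using assms unfolding vD_def
  proof (intro conjI allI impI)
    fix r assume rc: "r < n"
    have "(\<lambda>x. (F x - H x) $ r) = (\<lambda>x. F x $ r - H x $ r)" using rc by (simp add: carrier_vecD[OF c(1)] carrier_vecD[OF c(2)])
    then show "((\<lambda>x. (F x - H x) $ r) has_real_derivative (G - K) $ r) (at x0)"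
      using assms rc unfolding vD_def by (auto intro!: derivative_intros)
  qed (auto intro: c)
qed

lemma mD_mult:
  assumes F: "mD F G nr k x0" and H: "mD H K k nc x0"
  shows "mD (\<lambda>x. F x * H x) (G * H x0 + F x0 * K) nr nc x0"
proof -
  have cF: "\<And>x. F x \<in> carrier_mat nr k" and cG: "G \<in> carrier_mat nr k"
   and cH: "\<And>x. H x \<in> carrier_mat k nc" and cK: "K \<in> carrier_mat k nc"
    using F H by (auto simp: mD_def)
  show ?thesis unfolding mD_def
  proof (intro conjI allI impI)
    fix r c assume r: "r < nr" and c: "c < nc"
    have e: "\<And>x. (F x * H x) $$ (r,c) = (\<Sum>j<k. F x $$ (r,j) * H x $$ (j,c))"
      using r c by (simp add: carrier_matD[OF cF] carrier_matD[OF cH] scalar_prod_def lessThan_atLeast0)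
    have e2: "(G * H x0 + F x0 * K) $$ (r,c) = (\<Sum>j<k. G $$ (r,j) * H x0 $$ (j,c) + K $$ (j,c) * F x0 $$ (r,j))"
      using r c by (simp add: carrier_matD[OF cF] carrier_matD[OF cH] carrier_matD[OF cG] carrier_matD[OF cK] scalar_prod_def lessThan_atLeast0 sum.distrib algebra_simps)
    show "((\<lambda>x. (F x * H x) $$ (r,c)) has_real_derivative (G * H x0 + F x0 * K) $$ (r,c)) (at x0)"
      unfolding e e2
      by (rule DERIV_sum, rule DERIV_mult) (use F H r c in \<open>auto simp: mD_def\<close>)
  qed (auto intro!: mult_carrier_mat[OF cF cH] add_carrier_mat mult_carrier_mat[OF cF cK])
qed

lemma vD_mult:
  assumes F: "mD F G nr k x0" and H: "vD H K k x0"
  shows "vD (\<lambda>x. F x *\<^sub>v H x) (G *\<^sub>v H x0 + F x0 *\<^sub>v K) nr x0"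
proof -
  have cF: "\<And>x. F x \<in> carrier_mat nr k" and cG: "G \<in> carrier_mat nr k"
   and cH: "\<And>x. H x \<in> carrier_vec k" and cK: "K \<in> carrier_vec k"
    using F H by (auto simp: mD_def vD_def)
  show ?thesis unfolding vD_def
  proof (intro conjI allI impI)
    fix r assume r: "r < nr"
    have e: "\<And>x. (F x *\<^sub>v H x) $ r = (\<Sum>j<k. F x $$ (r,j) * H x $ j)"
      using r by (simp add: carrier_matD[OF cF] carrier_vecD[OF cH] scalar_prod_def lessThan_atLeast0)
    have e2: "(G *\<^sub>v H x0 + F x0 *\<^sub>v K) $ r = (\<Sum>j<k. G $$ (r,j) * H x0 $ j + K $ j * F x0 $$ (r,j))"
      using r by (simp add: carrier_matD[OF cF] carrier_vecD[OF cH] carrier_matD[OF cG] carrier_vecD[OF cK] scalar_prod_def lessThan_atLeast0 sum.distrib algebra_simps)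
    show "((\<lambda>x. (F x *\<^sub>v H x) $ r) has_real_derivative (G *\<^sub>v H x0 + F x0 *\<^sub>v K) $ r) (at x0)"
      unfolding e e2
      by (rule DERIV_sum, rule DERIV_mult) (use F H r in \<open>auto simp: mD_def vD_def\<close>)
  qed (auto intro!: mult_mat_vec_carrier[OF cF cH] add_carrier_vec mult_mat_vec_carrier[OF cF cK] mult_mat_vec_carrier[OF cG cH])
qed




lemma differentiable_prod_at:
  fixes f :: "'a \<Rightarrow> real \<Rightarrow> real"
  assumes "finite S" "\<forall>a\<in>S. f a differentiable (at x0)"
  shows "(\<lambda>x. \<Prod>a\<in>S. f a x) differentiable (at x0)"
  using assms
proof (induction S rule: finite_induct)
  case empty then show ?case by simp
next
  case (insert a S)
  then have "(\<lambda>x. f a x * (\<Prod>a\<in>S. f a x)) differentiable (at x0)"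
    by (intro differentiable_mult) auto
  then show ?case using insert by simp
qed

lemma det_differentiable:
  fixes M :: "real \<Rightarrow> real mat"
  assumes c: "\<And>x. M x \<in> carrier_mat k k"
    and d: "\<And>r c. r < k \<Longrightarrow> c < k \<Longrightarrow> (\<lambda>x. M x $$ (r,c)) differentiable (at x0)"
  shows "(\<lambda>x. det (M x)) differentiable (at x0)"
proof -
  have e: "(\<lambda>x. det (M x)) = (\<lambda>x. \<Sum>p\<in>{p. p permutes {0..<k}}. signof p * (\<Prod>i = 0..<k. M x $$ (i, p i)))"
    using det_def'[OF c] by auto
  show ?thesis unfolding e
  proof (rule differentiable_sum)
    show "finite {p. p permutes {0..<k}}" by (simp add: finite_permutations)
    show "\<forall>p\<in>{p. p permutes {0..<k}}. (\<lambda>x. signof p * (\<Prod>i = 0..<k. M x $$ (i, p i))) differentiable (at x0)"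
    proof
      fix p assume "p \<in> {p. p permutes {0..<k}}"
      then have p: "\<And>i. i < k \<Longrightarrow> p i < k" by (auto dest: permutes_in_image)
      show "(\<lambda>x. signof p * (\<Prod>i = 0..<k. M x $$ (i, p i))) differentiable (at x0)"
      proof -
        have "(\<lambda>x. \<Prod>i = 0..<k. M x $$ (i, p i)) differentiable (at x0)"
          by (rule differentiable_prod_at) (auto intro!: d p)
        then show ?thesis by simp
      qed
    qed
  qed
qed

lemma mD_of_differentiable:
  assumes "\<And>x. F x \<in> carrier_mat nr nc"
    and "\<And>r c. r < nr \<Longrightarrow> c < nc \<Longrightarrow> (\<lambda>x. F x $$ (r,c)) differentiable (at x0)"
  shows "\<exists>G. mD F G nr nc x0"
proof -
  let ?G = "mat nr nc (\<lambda>(r,c). SOME D. ((\<lambda>x. F x $$ (r,c)) has_real_derivative D) (at x0)) :: real mat"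
  have "mD F ?G nr nc x0" unfolding mD_def
    using assms by (auto intro: someI_ex simp: real_differentiable_def)
  then show ?thesis by blast
qed

lemma minv_inverse:
  assumes A: "A \<in> carrier_mat n n" and d: "det A \<noteq> 0"
  shows "minv A \<in> carrier_mat n n" "A * minv A = 1\<^sub>m n" "minv A * A = 1\<^sub>m n"
proof -
  let ?B = "(1 / det A) \<cdot>\<^sub>m adj_mat A"
  have B: "?B \<in> carrier_mat n n" using adj_mat(1)[OF A] by simp
  have s: "1 / det A \<cdot>\<^sub>m (det A \<cdot>\<^sub>m 1\<^sub>m n) = 1\<^sub>m n"
    by (rule eq_matI) (use d in auto)
  have "A * ?B = 1\<^sub>m n"
    using adj_mat(2)[OF A] mult_smult_distrib[OF A adj_mat(1)[OF A]] s by simp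
  moreover have "?B * A = 1\<^sub>m n"
    using adj_mat(3)[OF A] mult_smult_assoc_mat[OF adj_mat(1)[OF A] A] s by simp
  ultimately have ex: "\<exists>B. B \<in> carrier_mat (dim_col A) (dim_row A) \<and> inverts_mat A B \<and> inverts_mat B A"
    using A B by (auto simp: inverts_mat_def intro!: exI[of _ ?B])
  from someI_ex[OF ex[folded minv_def]] 
  have "minv A \<in> carrier_mat (dim_col A) (dim_row A) \<and> inverts_mat A (minv A) \<and> inverts_mat (minv A) A"
    unfolding minv_def .
  then show "minv A \<in> carrier_mat n n" "A * minv A = 1\<^sub>m n" "minv A * A = 1\<^sub>m n"
    using A by (auto simp: inverts_mat_def)
qed

lemma minv_adj:
  assumes A: "A \<in> carrier_mat n n" and d: "det A \<noteq> 0"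
  shows "minv A = (1 / det A) \<cdot>\<^sub>m adj_mat A"
proof -
  let ?B = "(1 / det A) \<cdot>\<^sub>m adj_mat A"
  have B: "?B \<in> carrier_mat n n" using adj_mat(1)[OF A] by simp
  have s: "1 / det A \<cdot>\<^sub>m (det A \<cdot>\<^sub>m 1\<^sub>m n) = 1\<^sub>m n"
    by (rule eq_matI) (use d in auto)
  have AB: "A * ?B = 1\<^sub>m n"
    using adj_mat(2)[OF A] mult_smult_distrib[OF A adj_mat(1)[OF A]] s by simp
  note M = minv_inverse[OF A d]
  have "minv A = minv A * (A * ?B)" using M(1) AB by simp
  also have "\<dots> = (minv A * A) * ?B" using M(1) A B by (simp add: assoc_mult_mat)
  also have "\<dots> = ?B" using M(3) B by (simp add: left_mult_one_mat)
  finally show ?thesis .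
qed

lemma mD_differentiable: "mD F G nr nc x0 \<Longrightarrow> r < nr \<Longrightarrow> c < nc \<Longrightarrow> (\<lambda>x. F x $$ (r,c)) differentiable (at x0)"
  unfolding mD_def real_differentiable_def by blast

lemma mD_minv:
  assumes F: "mD F dF n n x0" and d: "\<And>x. det (F x) \<noteq> 0"
  shows "mD (\<lambda>x. minv (F x)) ((-1) \<cdot>\<^sub>m (minv (F x0) * dF * minv (F x0))) n n x0"
proof -
  have cF: "\<And>x. F x \<in> carrier_mat n n" and cdF: "dF \<in> carrier_mat n n" using F by (auto simp: mD_def)
  have ddet: "(\<lambda>x. det (F x)) differentiable (at x0)"
    by (rule det_differentiable[OF cF]) (rule mD_differentiable[OF F])
  have "\<exists>G. mD (\<lambda>x. minv (F x)) G n n x0"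
  proof (rule mD_of_differentiable)
    show "\<And>x. minv (F x) \<in> carrier_mat n n" using minv_inverse(1)[OF cF d] .
    fix r c assume rc: "r < n" "c < n"
    have e: "(\<lambda>x. minv (F x) $$ (r,c)) = (\<lambda>x. 1 / det (F x) * ((-1)^(c+r) * det (mat_delete (F x) c r)))"
      using rc by (simp add: minv_adj[OF cF d] adj_mat_def cofactor_def carrier_matD[OF cF])
    have dd: "(\<lambda>x. det (mat_delete (F x) c r)) differentiable (at x0)"
    proof (rule det_differentiable)
      show "\<And>x. mat_delete (F x) c r \<in> carrier_mat (n-1) (n-1)" by (rule mat_delete_carrier[OF cF])
      fix r' c' assume "r' < n - 1" "c' < n - 1"
      then have e2: "(\<lambda>x. mat_delete (F x) c r $$ (r',c')) = (\<lambda>x. F x $$ (if r' < c then r' else Suc r', if c' < r then c' else Suc c'))"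
        by (simp add: mat_delete_def carrier_matD[OF cF])
      show "(\<lambda>x. mat_delete (F x) c r $$ (r',c')) differentiable (at x0)" unfolding e2
        by (rule mD_differentiable[OF F]) (use \<open>r' < n - 1\<close> \<open>c' < n - 1\<close> in auto)
    qed
    show "(\<lambda>x. minv (F x) $$ (r,c)) differentiable (at x0)" unfolding e
      by (intro differentiable_mult differentiable_divide differentiable_const ddet dd d)
  qed
  then obtain G where G: "mD (\<lambda>x. minv (F x)) G n n x0" by blast
  have cG: "G \<in> carrier_mat n n" using G by (simp add: mD_def)
  note Mi = minv_inverse[OF cF d]
  have cI: "minv (F x0) \<in> carrier_mat n n" by (rule Mi(1))
  have P: "mD (\<lambda>x. F x * minv (F x)) (dF * minv (F x0) + F x0 * G) n n x0"
    by (rule mD_mult[OF F G])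
  have "(\<lambda>x. F x * minv (F x)) = (\<lambda>x. 1\<^sub>m n)" using Mi(2) by auto
  with P have P2: "mD (\<lambda>x. 1\<^sub>m n) (dF * minv (F x0) + F x0 * G) n n x0" by simp
  have Z: "dF * minv (F x0) + F x0 * G = 0\<^sub>m n n"
    by (rule mD_unique[OF P2 mD_const]) simp
  have FG: "F x0 * G = (-1) \<cdot>\<^sub>m (dF * minv (F x0))"
  proof (rule eq_matI)
    fix r c assume rc: "r < dim_row ((-1) \<cdot>\<^sub>m (dF * minv (F x0)))" "c < dim_col ((-1) \<cdot>\<^sub>m (dF * minv (F x0)))"
    then have rc': "r < n" "c < n" using cdF cI by auto
    have "(dF * minv (F x0) + F x0 * G) $$ (r,c) = 0" using Z rc' by simp
    then have "(dF * minv (F x0)) $$ (r,c) + (F x0 * G) $$ (r,c) = 0"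
      using rc' cdF cI cF[of x0] cG by simp
    then show "(F x0 * G) $$ (r,c) = ((-1) \<cdot>\<^sub>m (dF * minv (F x0))) $$ (r,c)"
      using rc' cdF cI by simp
  qed (use cF[of x0] cG cdF cI in auto)
  have "G = (minv (F x0) * F x0) * G" using Mi(3) cG by simp
  also have "\<dots> = minv (F x0) * (F x0 * G)" using cI cF[of x0] cG by (simp add: assoc_mult_mat)
  also have "\<dots> = (-1) \<cdot>\<^sub>m (minv (F x0) * dF * minv (F x0))"
    unfolding FG using cI cdF by (simp add: mult_smult_distrib[of _ n n _ n] assoc_mult_mat[of _ n n _ n _ n])
  finally show ?thesis using G by simp
qed




lemma assoc_d: "dim_col A = dim_row B \<Longrightarrow> dim_col B = dim_row C \<Longrightarrow> (A::real mat) * B * C = A * (B * C)"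
  by (rule assoc_mult_mat[of A "dim_row A" "dim_col A" B "dim_col B" C "dim_col C"]) auto
lemma add_mult_d: "dim_row A = dim_row B \<Longrightarrow> dim_col A = dim_col B \<Longrightarrow> dim_col A = dim_row C \<Longrightarrow> ((A::real mat) + B) * C = A * C + B * C"
  by (rule add_mult_distrib_mat[of A "dim_row A" "dim_col A"]) auto
lemma mult_add_d: "dim_col A = dim_row B \<Longrightarrow> dim_row B = dim_row C \<Longrightarrow> dim_col B = dim_col C \<Longrightarrow> (A::real mat) * (B + C) = A * B + A * C"
  by (rule mult_add_distrib_mat[of A "dim_row A" "dim_col A"]) auto
lemma minus_mult_d: "dim_row A = dim_row B \<Longrightarrow> dim_col A = dim_col B \<Longrightarrow> dim_col A = dim_row C \<Longrightarrow> ((A::real mat) - B) * C = A * C - B * C"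
  by (rule minus_mult_distrib_mat[of A "dim_row A" "dim_col A"]) auto
lemma mult_minus_d: "dim_col A = dim_row B \<Longrightarrow> dim_row B = dim_row C \<Longrightarrow> dim_col B = dim_col C \<Longrightarrow> (A::real mat) * (B - C) = A * B - A * C"
  by (rule mult_minus_distrib_mat[of A "dim_row A" "dim_col A"]) auto
lemma transpose_mult_d: "dim_col A = dim_row B \<Longrightarrow> ((A::real mat) * B)\<^sup>T = B\<^sup>T * A\<^sup>T"
  by (rule transpose_mult[of A "dim_row A" "dim_col A" B "dim_col B"]) auto
lemma transpose_add_d: "dim_row A = dim_row B \<Longrightarrow> dim_col A = dim_col B \<Longrightarrow> ((A::real mat) + B)\<^sup>T = A\<^sup>T + B\<^sup>T"
  by (rule transpose_add[of A "dim_row A" "dim_col A"]) auto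
lemma assoc_add_d: "dim_row A = dim_row B \<Longrightarrow> dim_col A = dim_col B \<Longrightarrow> dim_row B = dim_row C \<Longrightarrow> dim_col B = dim_col C \<Longrightarrow> ((A::real mat) + B) + C = A + (B + C)"
  by (rule assoc_add_mat[of A "dim_row A" "dim_col A"]) auto

lemmas mat_d = assoc_d add_mult_d mult_add_d transpose_mult_d transpose_add_d assoc_add_d


lemma mwgs_props:
  assumes "mwgs_ok A DA"
  shows "mwgs_spec A DA (fst (mwgs A DA)) (fst (snd (mwgs A DA))) (snd (snd (mwgs A DA)))
     \<and> (\<forall>j<dim_col A. snd (snd (mwgs A DA)) $$ (j,j) \<noteq> 0)"
proof -
  from assms obtain W R DR where "mwgs_spec A DA W R DR \<and> (\<forall>j<dim_col A. DR $$ (j,j) \<noteq> 0)"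
    unfolding mwgs_ok_def by blast
  then have ex: "\<exists>x. (\<lambda>(W,R,DR). mwgs_spec A DA W R DR \<and> (\<forall>j<dim_col A. DR $$ (j,j) \<noteq> 0)) x"
    by (intro exI[of _ "(W,R,DR)"]) simp
  have "(\<lambda>(W,R,DR). mwgs_spec A DA W R DR \<and> (\<forall>j<dim_col A. DR $$ (j,j) \<noteq> 0)) (mwgs A DA)"
    unfolding mwgs_def by (rule someI_ex[OF ex])
  then show ?thesis by (cases "mwgs A DA") auto
qed

lemma mult_diag_right: "D \<in> carrier_mat s s \<Longrightarrow> diagonal_mat D \<Longrightarrow> X \<in> carrier_mat q s \<Longrightarrow> r < q \<Longrightarrow> c < s \<Longrightarrow>
   (X * (D::real mat)) $$ (r,c) = X $$ (r,c) * D $$ (c,c)"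
proof -
  assume D: "D \<in> carrier_mat s s" and dg: "diagonal_mat D" and X: "X \<in> carrier_mat q s" and rc: "r < q" "c < s"
  have "(X * D) $$ (r,c) = (\<Sum>j\<in>{0..<s}. X $$ (r,j) * D $$ (j,c))"
    using D X rc by (simp add: scalar_prod_def)
  also have "\<dots> = (\<Sum>j\<in>{0..<s}. if j = c then X $$ (r,c) * D $$ (c,c) else 0)"
    using dg D rc by (intro sum.cong) (auto simp: diagonal_mat_def)
  also have "\<dots> = X $$ (r,c) * D $$ (c,c)" using rc by simp
  finally show ?thesis .
qed

lemma mult_diag_left: "D \<in> carrier_mat s s \<Longrightarrow> diagonal_mat D \<Longrightarrow> X \<in> carrier_mat s q \<Longrightarrow> r < s \<Longrightarrow> c < q \<Longrightarrow>
   ((D::real mat) * X) $$ (r,c) = D $$ (r,r) * X $$ (r,c)"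
proof -
  assume D: "D \<in> carrier_mat s s" and dg: "diagonal_mat D" and X: "X \<in> carrier_mat s q" and rc: "r < s" "c < q"
  have "(D * X) $$ (r,c) = (\<Sum>j\<in>{0..<s}. D $$ (r,j) * X $$ (j,c))"
    using D X rc by (simp add: scalar_prod_def)
  also have "\<dots> = (\<Sum>j\<in>{0..<s}. if j = r then D $$ (r,r) * X $$ (r,c) else 0)"
    using dg D rc by (intro sum.cong) (auto simp: diagonal_mat_def)
  also have "\<dots> = D $$ (r,r) * X $$ (r,c)" using rc by simp
  finally show ?thesis .
qed

lemma strict_upper_solve:
  assumes R: "R \<in> carrier_mat s s" and uu: "unit_upper R" and X: "X \<in> carrier_mat s s"
    and su: "\<And>r c. r < s \<Longrightarrow> c < s \<Longrightarrow> c \<le> r \<Longrightarrow> ((R::real mat) * X) $$ (r,c) = 0"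
  shows "\<And>r c. r < s \<Longrightarrow> c < s \<Longrightarrow> c \<le> r \<Longrightarrow> X $$ (r,c) = 0"
proof -
  have main: "\<forall>r c. r < s \<longrightarrow> c < s \<longrightarrow> c \<le> r \<longrightarrow> s - r = t \<longrightarrow> X $$ (r,c) = 0" for t
  proof (induction t rule: less_induct)
    case (less t)
    show ?case
    proof (intro allI impI)
      fix r c assume rc: "r < s" "c < s" "c \<le> r" "s - r = t"
      have IH: "\<And>j. r < j \<Longrightarrow> j < s \<Longrightarrow> X $$ (j,c) = 0"
        using less.IH rc by (metis diff_less_mono2 less_trans_Suc order_less_imp_le order.strict_trans2 le_trans less_imp_le_nat)
      have "(R * X) $$ (r,c) = (\<Sum>j\<in>{0..<s}. R $$ (r,j) * X $$ (j,c))"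
        using R X rc by (simp add: scalar_prod_def)
      also have "\<dots> = (\<Sum>j\<in>{0..<s}. if j = r then X $$ (r,c) else 0)"
      proof (intro sum.cong refl)
        fix j assume j: "j \<in> {0..<s}"
        show "R $$ (r,j) * X $$ (j,c) = (if j = r then X $$ (r,c) else 0)"
        proof (cases "j < r")
          case True then show ?thesis using uu R rc by (auto simp: unit_upper_def upper_triangular_def)
        next
          case False
          show ?thesis
          proof (cases "j = r")
            case True then show ?thesis using uu R rc by (auto simp: unit_upper_def)
          next
            case F2: False
            with False have "r < j" by simp
            then show ?thesis using IH j F2 by auto
          qed
        qed
      qed
      also have "\<dots> = X $$ (r,c)" using rc by simp
      finally show "X $$ (r,c) = 0" using su rc by simp
    qed
  qed
  fix r c assume "r < s" "c < s" "c \<le> r"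
  then show "X $$ (r,c) = 0" using main by blast
qed




lemma diff_ud_correct:
  fixes A DA :: "real \<Rightarrow> real mat"
  assumes ok: "\<And>x. mwgs_ok (A x) (DA x)"
    and dA: "mD A dA r s x0" and dD: "mD DA dDA r r x0"
    and dR: "mD (\<lambda>x. fst (snd (mwgs (A x) (DA x)))) dR s s x0"
    and dE: "mD (\<lambda>x. snd (snd (mwgs (A x) (DA x)))) dE s s x0"
  shows "diff_ud (A x0) (DA x0) dA dDA = (dR, dE)"
proof -
  define W where "W = (\<lambda>x. fst (mwgs (A x) (DA x)))"
  define R where "R = (\<lambda>x. fst (snd (mwgs (A x) (DA x))))"
  define E where "E = (\<lambda>x. snd (snd (mwgs (A x) (DA x))))"
  have cA: "\<And>x. A x \<in> carrier_mat r s" and cdA: "dA \<in> carrier_mat r s" using dA by (auto simp: mD_def)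
  have sp: "\<And>x. mwgs_spec (A x) (DA x) (W x) (R x) (E x) \<and> (\<forall>j<s. E x $$ (j,j) \<noteq> 0)"
    using mwgs_props[OF ok] carrier_matD[OF cA] unfolding W_def R_def E_def by simp
  have cD: "\<And>x. DA x \<in> carrier_mat r r" and dgD: "\<And>x. diagonal_mat (DA x)"
    and cW: "\<And>x. W x \<in> carrier_mat r s" and cR: "\<And>x. R x \<in> carrier_mat s s"
    and uR: "\<And>x. unit_upper (R x)" and cE: "\<And>x. E x \<in> carrier_mat s s"
    and dgE: "\<And>x. diagonal_mat (E x)" and f1: "\<And>x. (A x)\<^sup>T = R x * (W x)\<^sup>T"
    and f2: "\<And>x. (W x)\<^sup>T * DA x * W x = E x" and nzE: "\<And>x j. j < s \<Longrightarrow> E x $$ (j,j) \<noteq> 0"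
    using sp carrier_matD[OF cA] unfolding mwgs_spec_def Let_def by auto
  have cdD: "dDA \<in> carrier_mat r r" using dD by (auto simp: mD_def)
  have cdR: "dR \<in> carrier_mat s s" using dR by (auto simp: mD_def)
  have cdE: "dE \<in> carrier_mat s s" using dE by (auto simp: mD_def)
  note dims = carrier_matD[OF cA] carrier_matD[OF cdA] carrier_matD[OF cD] carrier_matD[OF cW]
    carrier_matD[OF cR] carrier_matD[OF cE] carrier_matD[OF cdD] carrier_matD[OF cdR] carrier_matD[OF cdE]
  have f1': "\<And>x. A x = W x * (R x)\<^sup>T"
  proof -
    fix x
    have "A x = ((A x)\<^sup>T)\<^sup>T" by simp
    also have "\<dots> = W x * (R x)\<^sup>T" unfolding f1 using dims by (simp add: transpose_mult_d)
    finally show "A x = W x * (R x)\<^sup>T" .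
  qed
  have key: "\<And>x. (A x)\<^sup>T * DA x * A x = R x * E x * (R x)\<^sup>T"
  proof -
    fix x
    have "(A x)\<^sup>T * DA x * A x = R x * ((W x)\<^sup>T * DA x * W x) * (R x)\<^sup>T"
    proof -
      have "(A x)\<^sup>T * DA x * A x = R x * (W x)\<^sup>T * DA x * (W x * (R x)\<^sup>T)"
        using f1[of x] f1'[of x] by metis
      also have "\<dots> = R x * ((W x)\<^sup>T * DA x * W x) * (R x)\<^sup>T" by (simp add: dims mat_d)
      finally show ?thesis .
    qed
    then show "(A x)\<^sup>T * DA x * A x = R x * E x * (R x)\<^sup>T" using f2 by simp
  qed
  have dR': "mD R dR s s x0" using dR unfolding R_def .
  have dE': "mD E dE s s x0" using dE unfolding E_def .
  have LD: "mD (\<lambda>x. (A x)\<^sup>T * DA x * A x) ((dA\<^sup>T * DA x0 + (A x0)\<^sup>T * dDA) * A x0 + ((A x0)\<^sup>T * DA x0) * dA) s s x0"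
    by (rule mD_mult[OF mD_mult[OF mD_transpose[OF dA] dD] dA])
  have RD: "mD (\<lambda>x. R x * E x * (R x)\<^sup>T) ((dR * E x0 + R x0 * dE) * (R x0)\<^sup>T + (R x0 * E x0) * dR\<^sup>T) s s x0"
    by (rule mD_mult[OF mD_mult[OF dR' dE'] mD_transpose[OF dR']])
  have LR: "(dA\<^sup>T * DA x0 + (A x0)\<^sup>T * dDA) * A x0 + ((A x0)\<^sup>T * DA x0) * dA
      = (dR * E x0 + R x0 * dE) * (R x0)\<^sup>T + (R x0 * E x0) * dR\<^sup>T"
    by (rule mD_unique[OF LD]) (use RD key in simp)
  define A0 where "A0 = A x0"
  define D0 where "D0 = DA x0"
  define W0 where "W0 = W x0"
  define R0 where "R0 = R x0"
  define E0 where "E0 = E x0"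
  define Ri where "Ri = minv R0"
  have cA0: "A0 \<in> carrier_mat r s" and cD0: "D0 \<in> carrier_mat r r" and cW0: "W0 \<in> carrier_mat r s"
    and cR0: "R0 \<in> carrier_mat s s" and cE0: "E0 \<in> carrier_mat s s"
    using cA cD cW cR cE by (auto simp: A0_def D0_def W0_def R0_def E0_def)
  have uR0: "unit_upper R0" using uR by (simp add: R0_def)
  have detR0: "det R0 = 1"
  proof -
    have "det R0 = prod_list (diag_mat R0)"
      by (rule det_upper_triangular[OF _ cR0]) (use uR0 in \<open>simp add: unit_upper_def\<close>)
    also have "diag_mat R0 = map (\<lambda>i. 1) [0..<s]"
      using uR0 cR0 by (auto simp: diag_mat_def unit_upper_def)
    also have "prod_list (map (\<lambda>i. 1::real) [0..<s]) = 1" by (induction s) auto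
    finally show ?thesis .
  qed
  note Rinv = minv_inverse[OF cR0, folded Ri_def, unfolded detR0, OF one_neq_zero]
  have cRi: "Ri \<in> carrier_mat s s" by (rule Rinv(1))
  have detE0: "det E0 \<noteq> 0"
  proof -
    have "det E0 = prod_list (diag_mat E0)"
      by (rule det_upper_triangular[OF _ cE0]) (use dgE cE0 in \<open>auto simp: E0_def diagonal_mat_def upper_triangular_def\<close>)
    moreover have "0 \<notin> set (diag_mat E0)"
      using nzE cE0 by (auto simp: diag_mat_def E0_def)
    ultimately show ?thesis by (simp add: prod_list_zero_iff)
  qed
  note Einv = minv_inverse[OF cE0 detE0]
  note dims0 = carrier_matD[OF cA0] carrier_matD[OF cD0] carrier_matD[OF cW0] carrier_matD[OF cR0]
    carrier_matD[OF cE0] carrier_matD[OF cRi] carrier_matD[OF cdA] carrier_matD[OF cdD] carrier_matD[OF cdR] carrier_matD[OF cdE]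
  have f10: "A0\<^sup>T = R0 * W0\<^sup>T" and f10': "A0 = W0 * R0\<^sup>T"
    using f1[of x0] f1'[of x0] by (simp_all add: A0_def W0_def R0_def)
  have f4: "A0 * Ri\<^sup>T = W0"
  proof -
    have "A0 * Ri\<^sup>T = W0 * (R0\<^sup>T * Ri\<^sup>T)" by (subst f10') (simp add: dims0 mat_d)
    also have "R0\<^sup>T * Ri\<^sup>T = (Ri * R0)\<^sup>T" by (simp add: dims0 mat_d)
    finally show ?thesis using Rinv(3) by (simp add: dims0)
  qed
  have f5: "Ri * (A0\<^sup>T * Z) = W0\<^sup>T * Z" if "dim_row Z = r" for Z
  proof -
    have "Ri * (A0\<^sup>T * Z) = (Ri * R0) * (W0\<^sup>T * Z)" using that by (simp add: f10 dims0 mat_d)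
    then show ?thesis using Rinv(3) that by (simp add: dims0)
  qed
  have r1: "Ri * (R0 * Z) = Z" if "dim_row Z = s" for Z
  proof -
    have "Ri * (R0 * Z) = (Ri * R0) * Z" using that by (simp add: dims0 mat_d)
    then show ?thesis using Rinv(3) that by simp
  qed
  have r2: "R0\<^sup>T * Ri\<^sup>T = 1\<^sub>m s"
  proof -
    have "R0\<^sup>T * Ri\<^sup>T = (Ri * R0)\<^sup>T" by (simp add: dims0 mat_d)
    then show ?thesis using Rinv(3) by simp
  qed
  have r2': "R0\<^sup>T * (Ri\<^sup>T * Z) = Z" if "dim_row Z = s" for Z
  proof -
    have "R0\<^sup>T * (Ri\<^sup>T * Z) = (R0\<^sup>T * Ri\<^sup>T) * Z" using that by (simp add: dims0 mat_d)
    then show ?thesis using r2 that by simp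
  qed
  have D0sym: "D0\<^sup>T = D0"
  proof (rule eq_matI)
    fix i j assume ij: "i < dim_row D0" "j < dim_col D0"
    have dg0: "diagonal_mat D0" using dgD by (simp add: D0_def)
    show "D0\<^sup>T $$ (i,j) = D0 $$ (i,j)"
    proof (cases "i = j")
      case False
      then show ?thesis using ij dg0 cD0 unfolding diagonal_mat_def by simp
    qed (use ij carrier_matD[OF cD0] in simp)
  qed (use carrier_matD[OF cD0] in simp_all)
  define M0 where "M0 = W0\<^sup>T * D0 * dA * Ri\<^sup>T"
  define M2 where "M2 = W0\<^sup>T * dDA * W0"
  define X where "X = Ri * dR"
  have cM0: "M0 \<in> carrier_mat s s" and cM2: "M2 \<in> carrier_mat s s" and cX: "X \<in> carrier_mat s s"
    unfolding carrier_mat_def M0_def M2_def X_def by (simp_all add: dims0)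
  have S1: "Ri * ((dA\<^sup>T * D0 + A0\<^sup>T * dDA) * A0 + (A0\<^sup>T * D0) * dA) * Ri\<^sup>T = M0\<^sup>T + M2 + M0"
  proof -
    have a: "(dA\<^sup>T * D0 + A0\<^sup>T * dDA) * A0 + (A0\<^sup>T * D0) * dA = dA\<^sup>T * D0 * A0 + A0\<^sup>T * dDA * A0 + A0\<^sup>T * D0 * dA"
      by (simp add: dims0 add_mult_d)
    have b: "Ri * (dA\<^sup>T * D0 * A0 + A0\<^sup>T * dDA * A0 + A0\<^sup>T * D0 * dA) * Ri\<^sup>T
       = Ri * (dA\<^sup>T * D0 * A0) * Ri\<^sup>T + Ri * (A0\<^sup>T * dDA * A0) * Ri\<^sup>T + Ri * (A0\<^sup>T * D0 * dA) * Ri\<^sup>T"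
      by (simp add: dims0 add_mult_d mult_add_d)
    have c1: "Ri * (dA\<^sup>T * D0 * A0) * Ri\<^sup>T = M0\<^sup>T"
      unfolding M0_def by (simp add: dims0 assoc_d f4 transpose_mult_d D0sym)
    have c2: "Ri * (A0\<^sup>T * dDA * A0) * Ri\<^sup>T = M2"
      unfolding M2_def by (simp add: dims0 assoc_d f4 f5)
    have c3: "Ri * (A0\<^sup>T * D0 * dA) * Ri\<^sup>T = M0"
      unfolding M0_def by (simp add: dims0 assoc_d f5)
    show ?thesis unfolding a b c1 c2 c3 ..
  qed
  have S2: "Ri * ((dR * E0 + R0 * dE) * R0\<^sup>T + (R0 * E0) * dR\<^sup>T) * Ri\<^sup>T = X * E0 + dE + E0 * X\<^sup>T"
  proof -
    have a: "(dR * E0 + R0 * dE) * R0\<^sup>T + (R0 * E0) * dR\<^sup>T = dR * E0 * R0\<^sup>T + R0 * dE * R0\<^sup>T + R0 * E0 * dR\<^sup>T"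
      by (simp add: dims0 add_mult_d)
    have b: "Ri * (dR * E0 * R0\<^sup>T + R0 * dE * R0\<^sup>T + R0 * E0 * dR\<^sup>T) * Ri\<^sup>T
       = Ri * (dR * E0 * R0\<^sup>T) * Ri\<^sup>T + Ri * (R0 * dE * R0\<^sup>T) * Ri\<^sup>T + Ri * (R0 * E0 * dR\<^sup>T) * Ri\<^sup>T"
      by (simp add: dims0 add_mult_d mult_add_d)
    have c1: "Ri * (dR * E0 * R0\<^sup>T) * Ri\<^sup>T = X * E0"
      unfolding X_def by (simp add: dims0 assoc_d r2)
    have c2: "Ri * (R0 * dE * R0\<^sup>T) * Ri\<^sup>T = dE"
      by (simp add: dims0 assoc_d r1 r2)
    have c3: "Ri * (R0 * E0 * dR\<^sup>T) * Ri\<^sup>T = E0 * X\<^sup>T"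
      unfolding X_def by (simp add: dims0 assoc_d r1 transpose_mult_d)
    show ?thesis unfolding a b c1 c2 c3 ..
  qed
  have S: "M0\<^sup>T + M2 + M0 = X * E0 + dE + E0 * X\<^sup>T"
    using S1 S2 LR by (simp add: A0_def D0_def R0_def E0_def)
  have dRz: "dR $$ (i,j) = 0" if ij: "i < s" "j < s" "j \<le> i" for i j
  proof -
    have e: "(\<lambda>x. R x $$ (i,j)) = (\<lambda>x. if i = j then 1 else 0)"
    proof
      fix x show "R x $$ (i,j) = (if i = j then 1 else 0)"
        using uR[of x] cR[of x] ij by (auto simp: unit_upper_def upper_triangular_def)
    qed
    have "((\<lambda>x. R x $$ (i,j)) has_real_derivative dR $$ (i,j)) (at x0)" using dR' ij by (auto simp: mD_def)
    then have "((\<lambda>x. if i = j then 1 else 0::real) has_real_derivative dR $$ (i,j)) (at x0)" unfolding e .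
    moreover have "((\<lambda>x. if i = j then 1 else 0::real) has_real_derivative 0) (at x0)" by (rule DERIV_const)
    ultimately show ?thesis by (rule DERIV_unique)
  qed
  have dEz: "dE $$ (i,j) = 0" if ij: "i < s" "j < s" "i \<noteq> j" for i j
  proof -
    have e: "(\<lambda>x. E x $$ (i,j)) = (\<lambda>x. 0)"
    proof
      fix x show "E x $$ (i,j) = 0"
        using dgE[of x] cE[of x] ij by (auto simp: diagonal_mat_def)
    qed
    have "((\<lambda>x. E x $$ (i,j)) has_real_derivative dE $$ (i,j)) (at x0)" using dE' ij by (auto simp: mD_def)
    then have "((\<lambda>x. 0::real) has_real_derivative dE $$ (i,j)) (at x0)" unfolding e .
    moreover have "((\<lambda>x. 0::real) has_real_derivative 0) (at x0)" by (rule DERIV_const)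
    ultimately show ?thesis by (rule DERIV_unique)
  qed
  have RX: "R0 * X = dR" unfolding X_def using Rinv(2) by (simp add: dims0 assoc_d[symmetric])
  have Xz: "X $$ (i,j) = 0" if "i < s" "j < s" "j \<le> i" for i j
    by (rule strict_upper_solve[OF cR0 uR0 cX _ that]) (simp add: RX dRz)
  have dgE0: "diagonal_mat E0" using dgE by (simp add: E0_def)
  have Sij: "M0 $$ (j,i) + M2 $$ (i,j) + M0 $$ (i,j) = X $$ (i,j) * E0 $$ (j,j) + dE $$ (i,j) + E0 $$ (i,i) * X $$ (j,i)"
    if ij: "i < s" "j < s" for i j
  proof -
    have "(M0\<^sup>T + M2 + M0) $$ (i,j) = (X * E0 + dE + E0 * X\<^sup>T) $$ (i,j)" using S by simp
    moreover have "(M0\<^sup>T + M2 + M0) $$ (i,j) = M0 $$ (j,i) + M2 $$ (i,j) + M0 $$ (i,j)"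
      using ij carrier_matD[OF cM0] carrier_matD[OF cM2] by simp
    moreover have "(X * E0 + dE + E0 * X\<^sup>T) $$ (i,j) = (X * E0) $$ (i,j) + dE $$ (i,j) + (E0 * X\<^sup>T) $$ (i,j)"
      using ij dims0 carrier_matD[OF cX] by simp
    moreover have "(X * E0) $$ (i,j) = X $$ (i,j) * E0 $$ (j,j)" by (rule mult_diag_right[OF cE0 dgE0 cX ij])
    moreover have "(E0 * X\<^sup>T) $$ (i,j) = E0 $$ (i,i) * X\<^sup>T $$ (i,j)"
      by (rule mult_diag_left[OF cE0 dgE0 _ ij]) (use cX in simp)
    ultimately show ?thesis using ij carrier_matD[OF cX] by simp
  qed
  have mw: "mwgs (A x0) (DA x0) = (W0, R0, E0)" by (simp add: W0_def R0_def E0_def W_def R_def E_def)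
  have du: "diff_ud (A x0) (DA x0) dA dDA = (R0 * ((slow M0)\<^sup>T + supp M0 + supp M2) * minv E0, 2 \<cdot>\<^sub>m sdiag M0 + sdiag M2)"
    unfolding diff_ud_def mw M0_def M2_def Ri_def by (simp add: D0_def Let_def)
  have N: "(slow M0)\<^sup>T + supp M0 + supp M2 = X * E0"
  proof (rule eq_matI)
    fix i j assume ij0: "i < dim_row (X * E0)" "j < dim_col (X * E0)"
    then have ij: "i < s" "j < s" using dims0 carrier_matD[OF cX] by auto
    have l: "((slow M0)\<^sup>T + supp M0 + supp M2) $$ (i,j) = (if i < j then M0 $$ (j,i) + M0 $$ (i,j) + M2 $$ (i,j) else 0)"
      using ij carrier_matD[OF cM0] carrier_matD[OF cM2] by (simp add: slow_def supp_def)
    have r: "(X * E0) $$ (i,j) = X $$ (i,j) * E0 $$ (j,j)" by (rule mult_diag_right[OF cE0 dgE0 cX ij])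
    show "((slow M0)\<^sup>T + supp M0 + supp M2) $$ (i,j) = (X * E0) $$ (i,j)"
    proof (cases "i < j")
      case True
      then show ?thesis unfolding l r using Sij[OF ij] dEz[OF ij] Xz[of j i] ij by simp
    next
      case False
      then show ?thesis unfolding l r using Xz[OF ij] by simp
    qed
  qed (use carrier_matD[OF cM0] carrier_matD[OF cM2] carrier_matD[OF cX] dims0 in \<open>simp_all add: slow_def supp_def\<close>)
  have first: "R0 * ((slow M0)\<^sup>T + supp M0 + supp M2) * minv E0 = dR"
  proof -
    have "R0 * (X * E0) * minv E0 = R0 * X * (E0 * minv E0)"
      using Einv(1) by (simp add: dims0 carrier_matD[OF cX] carrier_matD[OF Einv(1)] assoc_d)
    also have "\<dots> = dR" using Einv(2) RX by (simp add: dims0)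
    finally show ?thesis unfolding N .
  qed
  have second: "2 \<cdot>\<^sub>m sdiag M0 + sdiag M2 = dE"
  proof (rule eq_matI)
    fix i j assume ij0: "i < dim_row dE" "j < dim_col dE"
    then have ij: "i < s" "j < s" using dims0 by auto
    show "(2 \<cdot>\<^sub>m sdiag M0 + sdiag M2) $$ (i,j) = dE $$ (i,j)"
    proof (cases "i = j")
      case True
      then show ?thesis using Sij[OF ij] Xz[OF ij] ij carrier_matD[OF cM0] carrier_matD[OF cM2] by (simp add: sdiag_def)
    next
      case False
      then show ?thesis using dEz[OF ij] ij carrier_matD[OF cM0] carrier_matD[OF cM2] by (simp add: sdiag_def)
    qed
  qed (use carrier_matD[OF cM0] carrier_matD[OF cM2] dims0 in \<open>simp_all add: sdiag_def\<close>)
  show ?thesis unfolding du first second ..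
qed




definition "R1f p U D = fst (snd (mwgs (pre1 p U) (bdiag D (pDQ p))))"
definition "DR1f p U D = snd (snd (mwgs (pre1 p U) (bdiag D (pDQ p))))"
definition "R2f p U D = fst (snd (mwgs (pre2 p (R1f p U D)) (bdiag (DR1f p U D) (pDH p))))"
definition "DR2f p U D = snd (snd (mwgs (pre2 p (R1f p U D)) (bdiag (DR1f p U D) (pDH p))))"
definition "apf p y k a = Tbar p *\<^sub>v a + Bbar p *\<^sub>v y (int k - 1) + (pS p * Hinv p) *\<^sub>v y (int k)"

lemma kf_step_fields:
  fixes p y k a U D
  defines "nn \<equiv> dim_row (R1f p U D)"
  shows
  "o_apred (kf_step p y k (a,U,D)) = apf p y k a"
  "o_UPp (kf_step p y k (a,U,D)) = R1f p U D"
  "o_DPp (kf_step p y k (a,U,D)) = DR1f p U D"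
  "o_UPu (kf_step p y k (a,U,D)) = fst (split_block (R2f p U D) nn nn)"
  "o_K (kf_step p y k (a,U,D)) = fst (snd (split_block (R2f p U D) nn nn))"
  "o_URe (kf_step p y k (a,U,D)) = snd (snd (snd (split_block (R2f p U D) nn nn)))"
  "o_DPu (kf_step p y k (a,U,D)) = fst (split_block (DR2f p U D) nn nn)"
  "o_DRe (kf_step p y k (a,U,D)) = snd (snd (snd (split_block (DR2f p U D) nn nn)))"
  "o_e (kf_step p y k (a,U,D)) = y (int k + 1) - pZ p *\<^sub>v apf p y k a - pbeta p *\<^sub>v y (int k)"
  "o_eb (kf_step p y k (a,U,D)) = minv (o_URe (kf_step p y k (a,U,D))) *\<^sub>v o_e (kf_step p y k (a,U,D))"
  "o_aupd (kf_step p y k (a,U,D)) = apf p y k a + o_K (kf_step p y k (a,U,D)) *\<^sub>v o_eb (kf_step p y k (a,U,D))"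
  unfolding kf_step_def R1f_def DR1f_def R2f_def DR2f_def apf_def nn_def
  by (simp_all add: Let_def split_def)

definition "dapf p d y k a da = dTbar p d *\<^sub>v a + Tbar p *\<^sub>v da + dBbar p d *\<^sub>v y (int k - 1)
              + (pS d * Hinv p) *\<^sub>v y (int k) - (pS p * Hinv p * pH d * Hinv p) *\<^sub>v y (int k)"
definition "dA1f p d U dU = (hcat (dTbar p d * U + Tbar p * dU) (pUQ d))\<^sup>T"
definition "dR1f p d U D dU dD = fst (diff_ud (pre1 p U) (bdiag D (pDQ p)) (dA1f p d U dU) (bdiag dD (pDQ d)))"
definition "dDR1f p d U D dU dD = snd (diff_ud (pre1 p U) (bdiag D (pDQ p)) (dA1f p d U dU) (bdiag dD (pDQ d)))"
definition "dA2f p d U D dU dD = (four_block_mat (dR1f p d U D dU dD) (0\<^sub>m (dim_row (R1f p U D)) (dim_col (pUH p)))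
                 (pZ d * R1f p U D + pZ p * dR1f p d U D dU dD) (pUH d))\<^sup>T"
definition "dR2f p d U D dU dD = fst (diff_ud (pre2 p (R1f p U D)) (bdiag (DR1f p U D) (pDH p)) (dA2f p d U D dU dD) (bdiag (dDR1f p d U D dU dD) (pDH d)))"
definition "dDR2f p d U D dU dD = snd (diff_ud (pre2 p (R1f p U D)) (bdiag (DR1f p U D) (pDH p)) (dA2f p d U D dU dD) (bdiag (dDR1f p d U D dU dD) (pDH d)))"

lemma kf_dstep_fields:
  fixes p d y k a U D da dU dD
  defines "nn \<equiv> dim_row (R1f p U D)" and "ou \<equiv> kf_step p y k (a,U,D)" and "dou \<equiv> kf_dstep p d y k (a,U,D) (da,dU,dD)"
  shows
  "d_apred dou = dapf p d y k a da"
  "d_UPp dou = dR1f p d U D dU dD"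
  "d_DPp dou = dDR1f p d U D dU dD"
  "d_UPu dou = fst (split_block (dR2f p d U D dU dD) nn nn)"
  "d_K dou = fst (snd (split_block (dR2f p d U D dU dD) nn nn))"
  "d_URe dou = snd (snd (snd (split_block (dR2f p d U D dU dD) nn nn)))"
  "d_DPu dou = fst (split_block (dDR2f p d U D dU dD) nn nn)"
  "d_DRe dou = snd (snd (snd (split_block (dDR2f p d U D dU dD) nn nn)))"
  "d_eb dou = (-1) \<cdot>\<^sub>v ((minv (o_URe ou) * d_URe dou * minv (o_URe ou)) *\<^sub>v o_e ou)
              - minv (o_URe ou) *\<^sub>v (pZ d *\<^sub>v o_apred ou + pZ p *\<^sub>v dapf p d y k a da + pbeta d *\<^sub>v y (int k))"
  "d_aupd dou = dapf p d y k a da + d_K dou *\<^sub>v o_eb ou + o_K ou *\<^sub>v d_eb dou"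
  unfolding dou_def ou_def nn_def kf_dstep_def dapf_def dA1f_def dR1f_def dDR1f_def dA2f_def dR2f_def dDR2f_def
  by (simp_all add: Let_def split_def kf_step_fields)

lemma mD_four_block:
  assumes A: "mD A GA n1 m1 x0" and B: "mD B GB n1 m2 x0" and C: "mD C GC n2 m1 x0" and Dd: "mD Dd GD n2 m2 x0"
  shows "mD (\<lambda>x. four_block_mat (A x) (B x) (C x) (Dd x)) (four_block_mat GA GB GC GD) (n1+n2) (m1+m2) x0"
proof -
  have cA: "\<And>x. A x \<in> carrier_mat n1 m1" and cB: "\<And>x. B x \<in> carrier_mat n1 m2"
    and cC: "\<And>x. C x \<in> carrier_mat n2 m1" and cD: "\<And>x. Dd x \<in> carrier_mat n2 m2"
    and gA: "GA \<in> carrier_mat n1 m1" and gB: "GB \<in> carrier_mat n1 m2"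
    and gC: "GC \<in> carrier_mat n2 m1" and gD: "GD \<in> carrier_mat n2 m2"
    using A B C Dd by (auto simp: mD_def)
  note dims = carrier_matD[OF cA] carrier_matD[OF cB] carrier_matD[OF cC] carrier_matD[OF cD]
    carrier_matD[OF gA] carrier_matD[OF gB] carrier_matD[OF gC] carrier_matD[OF gD]
  show ?thesis unfolding mD_def
  proof (intro conjI allI impI)
    fix x show "four_block_mat (A x) (B x) (C x) (Dd x) \<in> carrier_mat (n1 + n2) (m1 + m2)"
      using cA cD by simp
  next
    show "four_block_mat GA GB GC GD \<in> carrier_mat (n1 + n2) (m1 + m2)" using gA gD by simp
  next
    fix r c assume rc: "r < n1 + n2" "c < m1 + m2"
    show "((\<lambda>x. four_block_mat (A x) (B x) (C x) (Dd x) $$ (r, c)) has_real_derivative four_block_mat GA GB GC GD $$ (r, c)) (at x0)"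
    proof (cases "r < n1")
      case True
      show ?thesis
      proof (cases "c < m1")
        case True
        have "(\<lambda>x. four_block_mat (A x) (B x) (C x) (Dd x) $$ (r, c)) = (\<lambda>x. A x $$ (r,c))"
          using rc \<open>r < n1\<close> True by (simp add: dims)
        then show ?thesis using A rc \<open>r < n1\<close> True by (simp add: dims mD_def)
      next
        case False
        have "(\<lambda>x. four_block_mat (A x) (B x) (C x) (Dd x) $$ (r, c)) = (\<lambda>x. B x $$ (r,c - m1))"
          using rc \<open>r < n1\<close> False by (simp add: dims)
        then show ?thesis using B rc \<open>r < n1\<close> False by (simp add: dims mD_def)
      qed
    next
      case F1: False
      show ?thesis
      proof (cases "c < m1")
        case True
        have "(\<lambda>x. four_block_mat (A x) (B x) (C x) (Dd x) $$ (r, c)) = (\<lambda>x. C x $$ (r - n1,c))"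
          using rc F1 True by (simp add: dims)
        then show ?thesis using C rc F1 True by (simp add: dims mD_def)
      next
        case False
        have "(\<lambda>x. four_block_mat (A x) (B x) (C x) (Dd x) $$ (r, c)) = (\<lambda>x. Dd x $$ (r - n1,c - m1))"
          using rc F1 False by (simp add: dims)
        then show ?thesis using Dd rc F1 False by (simp add: dims mD_def)
      qed
    qed
  qed
qed

lemma mD_split:
  assumes F: "mD F G (n1+n2) (m1+m2) x0"
  shows "mD (\<lambda>x. fst (split_block (F x) n1 m1)) (fst (split_block G n1 m1)) n1 m1 x0"
    "mD (\<lambda>x. fst (snd (split_block (F x) n1 m1))) (fst (snd (split_block G n1 m1))) n1 m2 x0"
    "mD (\<lambda>x. fst (snd (snd (split_block (F x) n1 m1)))) (fst (snd (snd (split_block G n1 m1)))) n2 m1 x0"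
    "mD (\<lambda>x. snd (snd (snd (split_block (F x) n1 m1)))) (snd (snd (snd (split_block G n1 m1)))) n2 m2 x0"
proof -
  have cF: "\<And>x. F x \<in> carrier_mat (n1+n2) (m1+m2)" and cG: "G \<in> carrier_mat (n1+n2) (m1+m2)"
    using F by (auto simp: mD_def)
  note dims = carrier_matD[OF cF] carrier_matD[OF cG]
  have d: "\<And>r c. r < n1+n2 \<Longrightarrow> c < m1+m2 \<Longrightarrow> ((\<lambda>x. F x $$ (r,c)) has_real_derivative G $$ (r,c)) (at x0)"
    using F by (auto simp: mD_def)
  show "mD (\<lambda>x. fst (split_block (F x) n1 m1)) (fst (split_block G n1 m1)) n1 m1 x0"
    unfolding mD_def split_block_def Let_def using d by (auto simp: dims)
  show "mD (\<lambda>x. fst (snd (split_block (F x) n1 m1))) (fst (snd (split_block G n1 m1))) n1 m2 x0"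
    unfolding mD_def split_block_def Let_def using d by (auto simp: dims)
  show "mD (\<lambda>x. fst (snd (snd (split_block (F x) n1 m1)))) (fst (snd (snd (split_block G n1 m1)))) n2 m1 x0"
    unfolding mD_def split_block_def Let_def using d by (auto simp: dims)
  show "mD (\<lambda>x. snd (snd (snd (split_block (F x) n1 m1)))) (snd (snd (snd (split_block G n1 m1)))) n2 m2 x0"
    unfolding mD_def split_block_def Let_def using d by (auto simp: dims)
qed

lemma split_four_block:
  assumes "A \<in> carrier_mat n1 m1" "B \<in> carrier_mat n1 m2" "C \<in> carrier_mat n2 m1" "D \<in> carrier_mat n2 m2"
  shows "split_block (four_block_mat A B C D) n1 m1 = (A, B, C, D)"
  using assms unfolding split_block_def Let_def
  by (auto intro!: eq_matI)

lemma four_block_split: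
  assumes "F \<in> carrier_mat (n1+n2) (m1+m2)"
  shows "four_block_mat (fst (split_block F n1 m1)) (fst (snd (split_block F n1 m1)))
           (fst (snd (snd (split_block F n1 m1)))) (snd (snd (snd (split_block F n1 m1)))) = F"
  using split_block[of F n1 m1 "fst (split_block F n1 m1)" "fst (snd (split_block F n1 m1))"
      "fst (snd (snd (split_block F n1 m1)))" "snd (snd (snd (split_block F n1 m1)))" n2 m2] assms
  by auto




lemma ud_fact_dims: "ud_fact P U D \<Longrightarrow> P \<in> carrier_mat k k \<Longrightarrow> U \<in> carrier_mat k k \<and> D \<in> carrier_mat k k"
  unfolding ud_fact_def by auto

lemma pos_def_det: assumes "pos_def H" "H \<in> carrier_mat m m" shows "det H \<noteq> 0"
proof
  assume "det H = 0"
  then obtain v where v: "v \<in> carrier_vec m" "v \<noteq> 0\<^sub>v m" "H *\<^sub>v v = 0\<^sub>v m"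
    using det_0_iff_vec_prod_zero[OF assms(2)] by blast
  from assms(1) obtain k where k: "H \<in> carrier_mat k k" "\<forall>x\<in>carrier_vec k. x \<noteq> 0\<^sub>v k \<longrightarrow> x \<bullet> (H *\<^sub>v x) > 0"
    unfolding pos_def_def by blast
  have "k = m" using k(1) assms(2) by auto
  then have "v \<bullet> (H *\<^sub>v v) > 0" using k v by auto
  moreover have "v \<bullet> (H *\<^sub>v v) = 0" using v by simp
  ultimately show False by simp
qed

lemma model_dims:
  assumes "model_ok n m p"
  shows "pT p \<in> carrier_mat n n" "pB p \<in> carrier_mat n m" "pZ p \<in> carrier_mat m n"
    "pbeta p \<in> carrier_mat m m" "pQ p \<in> carrier_mat n n" "pS p \<in> carrier_mat n m"
    "pH p \<in> carrier_mat m m" "pa0 p \<in> carrier_vec n" "det (pH p) \<noteq> 0"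
    "Hinv p \<in> carrier_mat m m" "Tbar p \<in> carrier_mat n n" "Bbar p \<in> carrier_mat n m"
    "pUH p \<in> carrier_mat m m" "pDH p \<in> carrier_mat m m" "pUQ p \<in> carrier_mat n n" "pDQ p \<in> carrier_mat n n"
    "pUPi p \<in> carrier_mat n n" "pDPi p \<in> carrier_mat n n"
proof -
  note M = assms[unfolded model_ok_def]
  show cT: "pT p \<in> carrier_mat n n" and "pB p \<in> carrier_mat n m" and cZ: "pZ p \<in> carrier_mat m n"
    "pbeta p \<in> carrier_mat m m" and cQ: "pQ p \<in> carrier_mat n n" and cS: "pS p \<in> carrier_mat n m"
    and cH: "pH p \<in> carrier_mat m m" and "pa0 p \<in> carrier_vec n" using M by auto
  show dH: "det (pH p) \<noteq> 0" using M cH pos_def_det by blast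
  show cHi: "Hinv p \<in> carrier_mat m m" unfolding Hinv_def by (rule minv_inverse(1)[OF cH dH])
  show "Tbar p \<in> carrier_mat n n" unfolding Tbar_def using cT cZ cS cHi by (auto intro!: minus_carrier_mat mult_carrier_mat)
  show "Bbar p \<in> carrier_mat n m" unfolding Bbar_def using M cS cHi by (auto intro!: minus_carrier_mat mult_carrier_mat)
  have "Qbar p \<in> carrier_mat n n" unfolding Qbar_def using cQ cS cHi by (auto intro!: minus_carrier_mat mult_carrier_mat)
  then show "pUQ p \<in> carrier_mat n n" "pDQ p \<in> carrier_mat n n" using M ud_fact_dims by blast+
  show "pUH p \<in> carrier_mat m m" "pDH p \<in> carrier_mat m m" using M ud_fact_dims cH by blast+
  have "pPi0 p \<in> carrier_mat n n" using M by auto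
  then show "pUPi p \<in> carrier_mat n n" "pDPi p \<in> carrier_mat n n" using M ud_fact_dims by blast+
qed

definition mdiff :: "(real \<Rightarrow> real mat) \<Rightarrow> nat \<Rightarrow> nat \<Rightarrow> real \<Rightarrow> bool" where
  "mdiff F nr nc x0 \<longleftrightarrow> (\<forall>r<nr. \<forall>c<nc. (\<lambda>x. F x $$ (r,c)) differentiable (at x0))"
definition vdiff :: "(real \<Rightarrow> real vec) \<Rightarrow> nat \<Rightarrow> real \<Rightarrow> bool" where
  "vdiff F nr x0 \<longleftrightarrow> (\<forall>r<nr. (\<lambda>x. F x $ r) differentiable (at x0))"

lemma mD_of_mdiff: "(\<And>x. F x \<in> carrier_mat nr nc) \<Longrightarrow> mdiff F nr nc x0 \<Longrightarrow> \<exists>G. mD F G nr nc x0"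
  unfolding mdiff_def by (rule mD_of_differentiable) auto

lemma vD_of_vdiff: assumes "\<And>x. F x \<in> carrier_vec nr" "vdiff F nr x0" shows "\<exists>G. vD F G nr x0"
proof -
  let ?G = "vec nr (\<lambda>r. SOME D. ((\<lambda>x. F x $ r) has_real_derivative D) (at x0)) :: real vec"
  have "vD F ?G nr x0" unfolding vD_def
    using assms by (auto intro: someI_ex simp: real_differentiable_def vdiff_def)
  then show ?thesis by blast
qed

lemma vD_mult_const: assumes F: "mD F G nr k x0" and v: "v \<in> carrier_vec k" shows "vD (\<lambda>x. F x *\<^sub>v v) (G *\<^sub>v v) nr x0"
proof -
  have e: "G *\<^sub>v v + F x0 *\<^sub>v 0\<^sub>v k = G *\<^sub>v v"
    by (rule eq_vecI) (use carrier_matD[OF mD_carrier(1)[OF F, of x0]] carrier_matD[OF mD_carrier(2)[OF F]] carrier_vecD[OF v] in \<open>auto simp: scalar_prod_def\<close>)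
  show ?thesis using vD_mult[OF F vD_const[OF v]] unfolding e .
qed

lemma mD_Hinv:
  assumes model: "\<And>x. model_ok n m (P x)" and dH: "mD (\<lambda>x. pH (P x)) (pH d) m m x0"
  shows "mD (\<lambda>x. Hinv (P x)) (dHinv (P x0) d) m m x0"
  unfolding Hinv_def dHinv_def by (rule mD_minv[OF dH model_dims(9)[OF model]])

lemma mD_Tbar:
  assumes model: "\<And>x. model_ok n m (P x)" and dT: "mD (\<lambda>x. pT (P x)) (pT d) n n x0"
    and dZ: "mD (\<lambda>x. pZ (P x)) (pZ d) m n x0" and dS: "mD (\<lambda>x. pS (P x)) (pS d) n m x0"
    and dH: "mD (\<lambda>x. pH (P x)) (pH d) m m x0"
  shows "mD (\<lambda>x. Tbar (P x)) (dTbar (P x0) d) n n x0"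
proof -
  note Hi = mD_Hinv[OF model dH]
  have "mD (\<lambda>x. pT (P x) - pS (P x) * Hinv (P x) * pZ (P x))
     (pT d - ((pS d * Hinv (P x0) + pS (P x0) * dHinv (P x0) d) * pZ (P x0) + pS (P x0) * Hinv (P x0) * pZ d)) n n x0"
    by (rule mD_minus[OF dT mD_mult[OF mD_mult[OF dS Hi] dZ]])
  moreover have "(pS d * Hinv (P x0) + pS (P x0) * dHinv (P x0) d) * pZ (P x0) = pS d * Hinv (P x0) * pZ (P x0) + pS (P x0) * dHinv (P x0) d * pZ (P x0)"
    using model_dims[OF model[of x0]] mD_carrier(2)[OF dS] mD_carrier(2)[OF Hi]
    by (simp add: add_mult_d carrier_matD)
  ultimately show ?thesis unfolding Tbar_def dTbar_def by simp
qed

lemma mD_Bbar: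
  assumes model: "\<And>x. model_ok n m (P x)" and dB: "mD (\<lambda>x. pB (P x)) (pB d) n m x0"
    and dbeta: "mD (\<lambda>x. pbeta (P x)) (pbeta d) m m x0" and dS: "mD (\<lambda>x. pS (P x)) (pS d) n m x0"
    and dH: "mD (\<lambda>x. pH (P x)) (pH d) m m x0"
  shows "mD (\<lambda>x. Bbar (P x)) (dBbar (P x0) d) n m x0"
proof -
  note Hi = mD_Hinv[OF model dH]
  have "mD (\<lambda>x. pB (P x) - pS (P x) * Hinv (P x) * pbeta (P x))
     (pB d - ((pS d * Hinv (P x0) + pS (P x0) * dHinv (P x0) d) * pbeta (P x0) + pS (P x0) * Hinv (P x0) * pbeta d)) n m x0"
    by (rule mD_minus[OF dB mD_mult[OF mD_mult[OF dS Hi] dbeta]])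
  moreover have "(pS d * Hinv (P x0) + pS (P x0) * dHinv (P x0) d) * pbeta (P x0) = pS d * Hinv (P x0) * pbeta (P x0) + pS (P x0) * dHinv (P x0) d * pbeta (P x0)"
    using model_dims[OF model[of x0]] mD_carrier(2)[OF dS] mD_carrier(2)[OF Hi]
    by (simp add: add_mult_d carrier_matD)
  ultimately show ?thesis unfolding Bbar_def dBbar_def by simp
qed

lemma smult_mat_vec: "dim_vec v = dim_col A \<Longrightarrow> ((c::real) \<cdot>\<^sub>m A) *\<^sub>v v = c \<cdot>\<^sub>v (A *\<^sub>v v)"
  by (rule eq_vecI) (auto simp: scalar_prod_def sum_distrib_left mult.assoc intro!: sum.cong)

lemma vec_alg1: "u1 \<in> carrier_vec n \<Longrightarrow> u2 \<in> carrier_vec n \<Longrightarrow> u3 \<in> carrier_vec n \<Longrightarrow> u4 \<in> carrier_vec n \<Longrightarrow> u5 \<in> carrier_vec n \<Longrightarrow>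
  (u1 + u2) + u3 + (u4 + (-1::real) \<cdot>\<^sub>v u5) = u1 + u2 + u3 + u4 - u5"
  by (rule eq_vecI) auto

lemma vD_apf:
  assumes model: "\<And>x. model_ok n m (P x)" and obs: "\<And>j. y j \<in> carrier_vec m"
    and dT: "mD (\<lambda>x. pT (P x)) (pT d) n n x0" and dB: "mD (\<lambda>x. pB (P x)) (pB d) n m x0"
    and dZ: "mD (\<lambda>x. pZ (P x)) (pZ d) m n x0" and dbeta: "mD (\<lambda>x. pbeta (P x)) (pbeta d) m m x0"
    and dS: "mD (\<lambda>x. pS (P x)) (pS d) n m x0" and dH: "mD (\<lambda>x. pH (P x)) (pH d) m m x0"
    and sa: "vD a da n x0"
  shows "vD (\<lambda>x. apf (P x) y k (a x)) (dapf (P x0) d y k (a x0) da) n x0"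
proof -
  note Hi = mD_Hinv[OF model dH]
  note Tb = mD_Tbar[OF model dT dZ dS dH]
  note Bb = mD_Bbar[OF model dB dbeta dS dH]
  have V: "vD (\<lambda>x. apf (P x) y k (a x))
    ((dTbar (P x0) d *\<^sub>v a x0 + Tbar (P x0) *\<^sub>v da) + dBbar (P x0) d *\<^sub>v y (int k - 1)
      + (pS d * Hinv (P x0) + pS (P x0) * dHinv (P x0) d) *\<^sub>v y (int k)) n x0"
    unfolding apf_def
    by (rule vD_add[OF vD_add[OF vD_mult[OF Tb sa] vD_mult_const[OF Bb obs]] vD_mult_const[OF mD_mult[OF dS Hi] obs]])
  note D0 = model_dims[OF model[of x0]]
  have cdS: "pS d \<in> carrier_mat n m" using dS by (simp add: mD_def)
  have cdH: "pH d \<in> carrier_mat m m" using dH by (simp add: mD_def)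
  have cdHi: "dHinv (P x0) d \<in> carrier_mat m m" using Hi by (simp add: mD_def)
  have cdT: "dTbar (P x0) d \<in> carrier_mat n n" using Tb by (simp add: mD_def)
  have cdB: "dBbar (P x0) d \<in> carrier_mat n m" using Bb by (simp add: mD_def)
  have ca: "a x0 \<in> carrier_vec n" and cda: "da \<in> carrier_vec n" using sa by (auto simp: vD_def)
  have e1: "pS (P x0) * dHinv (P x0) d = (-1) \<cdot>\<^sub>m (pS (P x0) * Hinv (P x0) * pH d * Hinv (P x0))"
    unfolding dHinv_def using D0 cdH
    by (simp add: mult_smult_distrib[of _ n m _ m] carrier_matD assoc_d)
  have cM: "pS (P x0) * Hinv (P x0) * pH d * Hinv (P x0) \<in> carrier_mat n m"
    using D0 cdH by (auto intro!: mult_carrier_mat)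
  have e2: "(pS d * Hinv (P x0) + pS (P x0) * dHinv (P x0) d) *\<^sub>v y (int k)
      = (pS d * Hinv (P x0)) *\<^sub>v y (int k) + (-1) \<cdot>\<^sub>v ((pS (P x0) * Hinv (P x0) * pH d * Hinv (P x0)) *\<^sub>v y (int k))"
  proof -
    have "(pS d * Hinv (P x0) + pS (P x0) * dHinv (P x0) d) *\<^sub>v y (int k)
      = (pS d * Hinv (P x0)) *\<^sub>v y (int k) + (pS (P x0) * dHinv (P x0) d) *\<^sub>v y (int k)"
      by (rule add_mult_distrib_mat_vec[of _ n m]) (use D0 cdS cdHi obs in auto)
    also have "(pS (P x0) * dHinv (P x0) d) *\<^sub>v y (int k) = (-1) \<cdot>\<^sub>v ((pS (P x0) * Hinv (P x0) * pH d * Hinv (P x0)) *\<^sub>v y (int k))"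
      unfolding e1 by (rule smult_mat_vec) (use carrier_matD[OF cM] carrier_vecD[OF obs[of "int k"]] in simp)
    finally show ?thesis .
  qed
  have "(dTbar (P x0) d *\<^sub>v a x0 + Tbar (P x0) *\<^sub>v da) + dBbar (P x0) d *\<^sub>v y (int k - 1)
      + (pS d * Hinv (P x0) + pS (P x0) * dHinv (P x0) d) *\<^sub>v y (int k) = dapf (P x0) d y k (a x0) da"
    unfolding dapf_def e2
    by (rule vec_alg1) (use D0 cdS cdH cM cdT cdB ca cda obs[of "int k"] obs[of "int k - 1"] in \<open>auto intro!: mult_mat_vec_carrier mult_carrier_mat\<close>)
  then show ?thesis using V by simp
qed

lemma pre1_eq: "U \<in> carrier_mat n n \<Longrightarrow> Tbar p \<in> carrier_mat n n \<Longrightarrow> pUQ p \<in> carrier_mat n n \<Longrightarrow>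
  pre1 p U = (four_block_mat (Tbar p * U) (pUQ p) (0\<^sub>m 0 n) (0\<^sub>m 0 n))\<^sup>T"
  unfolding pre1_def hcat_def by simp

lemma dA1f_eq: "dU \<in> carrier_mat n n \<Longrightarrow> Tbar p \<in> carrier_mat n n \<Longrightarrow> pUQ d \<in> carrier_mat n n \<Longrightarrow> dTbar p d \<in> carrier_mat n n \<Longrightarrow>
  U \<in> carrier_mat n n \<Longrightarrow>
  dA1f p d U dU = (four_block_mat (dTbar p d * U + Tbar p * dU) (pUQ d) (0\<^sub>m 0 n) (0\<^sub>m 0 n))\<^sup>T"
  unfolding dA1f_def hcat_def by simp

lemma bdiag_eq: "A \<in> carrier_mat a a \<Longrightarrow> B \<in> carrier_mat b b \<Longrightarrow> bdiag A B = four_block_mat A (0\<^sub>m a b) (0\<^sub>m b a) B"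
  unfolding bdiag_def by simp

lemma pre2_eq: "R \<in> carrier_mat n n \<Longrightarrow> pUH p \<in> carrier_mat m m \<Longrightarrow>
  pre2 p R = (four_block_mat R (0\<^sub>m n m) (pZ p * R) (pUH p))\<^sup>T"
  unfolding pre2_def by simp

lemma unit_upper_blocks:
  assumes R: "R \<in> carrier_mat (n+m) (n+m)" and u: "unit_upper R"
  shows "fst (snd (snd (split_block R n n))) = 0\<^sub>m m n"
    "unit_upper (snd (snd (snd (split_block R n n))))"
  using R u unfolding split_block_def Let_def unit_upper_def upper_triangular_def
  by (auto intro!: eq_matI)

lemma diag_blocks:
  assumes R: "R \<in> carrier_mat (n+m) (n+m)" and u: "diagonal_mat R"
  shows "fst (snd (snd (split_block R n n))) = 0\<^sub>m m n"
    "fst (snd (split_block R n n)) = 0\<^sub>m n m"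
  using R u unfolding split_block_def Let_def diagonal_mat_def
  by (auto intro!: eq_matI)

lemma unit_upper_det: assumes "R \<in> carrier_mat s s" "unit_upper R" shows "det R = 1"
proof -
  have "det R = prod_list (diag_mat R)"
    by (rule det_upper_triangular[OF _ assms(1)]) (use assms(2) in \<open>simp add: unit_upper_def\<close>)
  also have "diag_mat R = map (\<lambda>i. 1) [0..<s]"
    using assms by (auto simp: diag_mat_def unit_upper_def)
  also have "prod_list (map (\<lambda>i. 1::real) [0..<s]) = 1" by (induction s) auto
  finally show ?thesis .
qed




lemma step_correct:
  fixes P :: "real \<Rightarrow> kf_par" and d :: kf_par and y :: "int \<Rightarrow> real vec" and k :: nat and x0 :: real
    and a :: "real \<Rightarrow> real vec" and U D :: "real \<Rightarrow> real mat" and da :: "real vec" and dU dD :: "real mat"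
  assumes model: "\<And>x. model_ok n m (P x)" and obs: "\<And>j. y j \<in> carrier_vec m"
    and dT: "mD (\<lambda>x. pT (P x)) (pT d) n n x0" and dB: "mD (\<lambda>x. pB (P x)) (pB d) n m x0"
    and dZ: "mD (\<lambda>x. pZ (P x)) (pZ d) m n x0" and dbeta: "mD (\<lambda>x. pbeta (P x)) (pbeta d) m m x0"
    and dS: "mD (\<lambda>x. pS (P x)) (pS d) n m x0" and dH: "mD (\<lambda>x. pH (P x)) (pH d) m m x0"
    and dUH: "mD (\<lambda>x. pUH (P x)) (pUH d) m m x0" and dDH: "mD (\<lambda>x. pDH (P x)) (pDH d) m m x0"
    and dUQ: "mD (\<lambda>x. pUQ (P x)) (pUQ d) n n x0" and dDQ: "mD (\<lambda>x. pDQ (P x)) (pDQ d) n n x0"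
    and sa: "vD a da n x0" and sU: "mD U dU n n x0" and sD: "mD D dD n n x0"
    and ok1: "\<And>x. mwgs_ok (pre1 (P x) (U x)) (bdiag (D x) (pDQ (P x)))"
    and ok2: "\<And>x. mwgs_ok (pre2 (P x) (R1f (P x) (U x) (D x))) (bdiag (DR1f (P x) (U x) (D x)) (pDH (P x)))"
    and df1: "mdiff (\<lambda>x. R1f (P x) (U x) (D x)) (dim_row (R1f (P x0) (U x0) (D x0))) (dim_col (R1f (P x0) (U x0) (D x0))) x0"
    and df2: "mdiff (\<lambda>x. DR1f (P x) (U x) (D x)) (dim_row (DR1f (P x0) (U x0) (D x0))) (dim_col (DR1f (P x0) (U x0) (D x0))) x0"
    and df3: "mdiff (\<lambda>x. o_UPu (kf_step (P x) y k (a x, U x, D x))) (dim_row (o_UPu (kf_step (P x0) y k (a x0, U x0, D x0)))) (dim_col (o_UPu (kf_step (P x0) y k (a x0, U x0, D x0)))) x0"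
    and df4: "mdiff (\<lambda>x. o_K (kf_step (P x) y k (a x, U x, D x))) (dim_row (o_K (kf_step (P x0) y k (a x0, U x0, D x0)))) (dim_col (o_K (kf_step (P x0) y k (a x0, U x0, D x0)))) x0"
    and df5: "mdiff (\<lambda>x. o_URe (kf_step (P x) y k (a x, U x, D x))) (dim_row (o_URe (kf_step (P x0) y k (a x0, U x0, D x0)))) (dim_col (o_URe (kf_step (P x0) y k (a x0, U x0, D x0)))) x0"
    and df6: "mdiff (\<lambda>x. o_DPu (kf_step (P x) y k (a x, U x, D x))) (dim_row (o_DPu (kf_step (P x0) y k (a x0, U x0, D x0)))) (dim_col (o_DPu (kf_step (P x0) y k (a x0, U x0, D x0)))) x0"
    and df7: "mdiff (\<lambda>x. o_DRe (kf_step (P x) y k (a x, U x, D x))) (dim_row (o_DRe (kf_step (P x0) y k (a x0, U x0, D x0)))) (dim_col (o_DRe (kf_step (P x0) y k (a x0, U x0, D x0)))) x0"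
    and df8: "vdiff (\<lambda>x. o_eb (kf_step (P x) y k (a x, U x, D x))) (dim_vec (o_eb (kf_step (P x0) y k (a x0, U x0, D x0)))) x0"
  defines "ou \<equiv> (\<lambda>x. kf_step (P x) y k (a x, U x, D x))"
    and "dou \<equiv> kf_dstep (P x0) d y k (a x0, U x0, D x0) (da, dU, dD)"
  shows "vD (\<lambda>x. o_apred (ou x)) (d_apred dou) n x0 \<and>
     mD (\<lambda>x. o_UPp (ou x)) (d_UPp dou) n n x0 \<and>
     mD (\<lambda>x. o_DPp (ou x)) (d_DPp dou) n n x0 \<and>
     mD (\<lambda>x. o_UPu (ou x)) (d_UPu dou) n n x0 \<and>
     mD (\<lambda>x. o_DPu (ou x)) (d_DPu dou) n n x0 \<and>
     mD (\<lambda>x. o_URe (ou x)) (d_URe dou) m m x0 \<and>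
     mD (\<lambda>x. o_DRe (ou x)) (d_DRe dou) m m x0 \<and>
     mD (\<lambda>x. o_K (ou x)) (d_K dou) n m x0 \<and>
     vD (\<lambda>x. o_eb (ou x)) (d_eb dou) m x0 \<and>
     vD (\<lambda>x. o_aupd (ou x)) (d_aupd dou) n x0"
proof -
  note Dx = model_dims[OF model]
  have ca: "\<And>x. a x \<in> carrier_vec n" and cda: "da \<in> carrier_vec n" using sa by (auto simp: vD_def)
  have cU: "\<And>x. U x \<in> carrier_mat n n" and cdU: "dU \<in> carrier_mat n n" using sU by (auto simp: mD_def)
  have cD: "\<And>x. D x \<in> carrier_mat n n" and cdD: "dD \<in> carrier_mat n n" using sD by (auto simp: mD_def)
  note Tb = mD_Tbar[OF model dT dZ dS dH]
  have cdT: "dTbar (P x0) d \<in> carrier_mat n n" using Tb by (simp add: mD_def)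
  have cdUQ: "pUQ d \<in> carrier_mat n n" and cdDQ: "pDQ d \<in> carrier_mat n n" and cdUH: "pUH d \<in> carrier_mat m m"
    and cdDH: "pDH d \<in> carrier_mat m m" and cdZ: "pZ d \<in> carrier_mat m n" and cdbeta: "pbeta d \<in> carrier_mat m m"
    using dUQ dDQ dUH dDH dZ dbeta by (auto simp: mD_def)
  define A1 where "A1 = (\<lambda>x. pre1 (P x) (U x))"
  define DA1 where "DA1 = (\<lambda>x. bdiag (D x) (pDQ (P x)))"
  have cA1: "A1 x \<in> carrier_mat (n+n) n" for x unfolding A1_def
  proof -
    have "four_block_mat (Tbar (P x) * U x) (pUQ (P x)) (0\<^sub>m 0 n) (0\<^sub>m 0 n) \<in> carrier_mat (n+0) (n+n)"
      using Dx(11,15)[of x] cU[of x] by (intro four_block_carrier_mat) auto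
    then show "pre1 (P x) (U x) \<in> carrier_mat (n+n) n"
      using Dx(11,15)[of x] cU[of x] by (simp add: pre1_eq)
  qed
  have cDA1: "DA1 x \<in> carrier_mat (n+n) (n+n)" for x unfolding DA1_def
    using Dx(16)[of x] cD[of x] by (simp add: bdiag_eq)
  have mA1: "mD A1 (dA1f (P x0) d (U x0) dU) (n+n) n x0"
  proof -
    have e: "A1 = (\<lambda>x. (four_block_mat (Tbar (P x) * U x) (pUQ (P x)) (0\<^sub>m 0 n) (0\<^sub>m 0 n))\<^sup>T)"
      unfolding A1_def by (intro ext) (simp add: pre1_eq[OF cU Dx(11) Dx(15)])
    have "mD (\<lambda>x. (four_block_mat (Tbar (P x) * U x) (pUQ (P x)) (0\<^sub>m 0 n) (0\<^sub>m 0 n))\<^sup>T)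
       ((four_block_mat (dTbar (P x0) d * U x0 + Tbar (P x0) * dU) (pUQ d) (0\<^sub>m 0 n) (0\<^sub>m 0 n))\<^sup>T) (n+n) (n+0) x0"
      by (rule mD_transpose[OF mD_four_block[OF mD_mult[OF Tb sU] dUQ mD_const mD_const]]) auto
    then show ?thesis unfolding e using Dx cU cdU cdUQ cdT by (simp add: dA1f_eq)
  qed
  have mDA1: "mD DA1 (bdiag dD (pDQ d)) (n+n) (n+n) x0"
  proof -
    have e: "DA1 = (\<lambda>x. four_block_mat (D x) (0\<^sub>m n n) (0\<^sub>m n n) (pDQ (P x)))"
      unfolding DA1_def by (intro ext) (simp add: bdiag_eq[OF cD Dx(16)])
    show ?thesis unfolding e using mD_four_block[OF sD mD_const mD_const dDQ] cdD cdDQ by (simp add: bdiag_eq)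
  qed
  have sp1: "\<And>x. mwgs_spec (A1 x) (DA1 x) (fst (mwgs (A1 x) (DA1 x))) (R1f (P x) (U x) (D x)) (DR1f (P x) (U x) (D x))"
    using mwgs_props[OF ok1] unfolding A1_def DA1_def R1f_def DR1f_def by simp
  have cR1: "R1f (P x) (U x) (D x) \<in> carrier_mat n n" and cDR1: "DR1f (P x) (U x) (D x) \<in> carrier_mat n n"
    and uR1: "unit_upper (R1f (P x) (U x) (D x))" and dgR1: "diagonal_mat (DR1f (P x) (U x) (D x))" for x
    using sp1[of x] carrier_matD[OF cA1[of x]] by (auto simp: mwgs_spec_def Let_def)
  have df1n: "mdiff (\<lambda>x. R1f (P x) (U x) (D x)) n n x0" using df1 cR1[of x0] by simp
  have df2n: "mdiff (\<lambda>x. DR1f (P x) (U x) (D x)) n n x0" using df2 cDR1[of x0] by simp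
  obtain GR1 where GR1: "mD (\<lambda>x. R1f (P x) (U x) (D x)) GR1 n n x0" using mD_of_mdiff[OF cR1 df1n] by blast
  obtain GDR1 where GDR1: "mD (\<lambda>x. DR1f (P x) (U x) (D x)) GDR1 n n x0" using mD_of_mdiff[OF cDR1 df2n] by blast
  have du1: "diff_ud (A1 x0) (DA1 x0) (dA1f (P x0) d (U x0) dU) (bdiag dD (pDQ d)) = (GR1, GDR1)"
    by (rule diff_ud_correct[OF _ mA1 mDA1]) (use ok1 GR1 GDR1 in \<open>simp_all add: A1_def DA1_def R1f_def DR1f_def\<close>)
  have eR1: "dR1f (P x0) d (U x0) (D x0) dU dD = GR1" and eDR1: "dDR1f (P x0) d (U x0) (D x0) dU dD = GDR1"
    using du1 unfolding dR1f_def dDR1f_def A1_def DA1_def by simp_all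
  have mR1: "mD (\<lambda>x. R1f (P x) (U x) (D x)) (dR1f (P x0) d (U x0) (D x0) dU dD) n n x0" using GR1 eR1 by simp
  have mDR1: "mD (\<lambda>x. DR1f (P x) (U x) (D x)) (dDR1f (P x0) d (U x0) (D x0) dU dD) n n x0" using GDR1 eDR1 by simp
  define R1 where "R1 = (\<lambda>x. R1f (P x) (U x) (D x))"
  define DR1 where "DR1 = (\<lambda>x. DR1f (P x) (U x) (D x))"
  define A2 where "A2 = (\<lambda>x. pre2 (P x) (R1 x))"
  define DA2 where "DA2 = (\<lambda>x. bdiag (DR1 x) (pDH (P x)))"
  have cA2: "A2 x \<in> carrier_mat (n+m) (n+m)" for x
  proof -
    have "four_block_mat (R1 x) (0\<^sub>m n m) (pZ (P x) * R1 x) (pUH (P x)) \<in> carrier_mat (n+m) (n+m)"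
      using Dx(13)[of x] cR1[of x] unfolding R1_def by (intro four_block_carrier_mat) auto
    then show ?thesis unfolding A2_def using pre2_eq[OF cR1[of x] Dx(13)[of x]] by (simp add: R1_def)
  qed
  have cDA2: "DA2 x \<in> carrier_mat (n+m) (n+m)" for x unfolding DA2_def R1_def
    using Dx(14)[of x] cDR1[of x] by (simp add: bdiag_eq DR1_def)
  have mA2: "mD A2 (dA2f (P x0) d (U x0) (D x0) dU dD) (n+m) (n+m) x0"
  proof -
    have e: "A2 = (\<lambda>x. (four_block_mat (R1 x) (0\<^sub>m n m) (pZ (P x) * R1 x) (pUH (P x)))\<^sup>T)"
      unfolding A2_def R1_def by (intro ext) (simp add: pre2_eq[OF cR1 Dx(13)])
    have mR1': "mD R1 (dR1f (P x0) d (U x0) (D x0) dU dD) n n x0" using mR1 by (simp add: R1_def)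
    have "mD (\<lambda>x. (four_block_mat (R1 x) (0\<^sub>m n m) (pZ (P x) * R1 x) (pUH (P x)))\<^sup>T)
       ((four_block_mat (dR1f (P x0) d (U x0) (D x0) dU dD) (0\<^sub>m n m) (pZ d * R1 x0 + pZ (P x0) * dR1f (P x0) d (U x0) (D x0) dU dD) (pUH d))\<^sup>T) (n+m) (n+m) x0"
      by (rule mD_transpose[OF mD_four_block[OF mR1' mD_const mD_mult[OF dZ mR1'] dUH]]) auto
    then show ?thesis unfolding e dA2f_def using carrier_matD[OF cR1[of x0]] carrier_matD[OF Dx(13)[of x0]]
      by (simp add: R1_def)
  qed
  have mDA2: "mD DA2 (bdiag (dDR1f (P x0) d (U x0) (D x0) dU dD) (pDH d)) (n+m) (n+m) x0"
  proof -
    have e: "DA2 = (\<lambda>x. four_block_mat (DR1 x) (0\<^sub>m n m) (0\<^sub>m m n) (pDH (P x)))"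
      unfolding DA2_def DR1_def by (intro ext) (simp add: bdiag_eq[OF cDR1 Dx(14)])
    have mDR1': "mD DR1 (dDR1f (P x0) d (U x0) (D x0) dU dD) n n x0" using mDR1 by (simp add: DR1_def)
    have cG: "dDR1f (P x0) d (U x0) (D x0) dU dD \<in> carrier_mat n n" using mDR1 by (simp add: mD_def)
    show ?thesis unfolding e using mD_four_block[OF mDR1' mD_const mD_const dDH] cG cdDH by (simp add: bdiag_eq)
  qed
  have sp2: "mwgs_spec (A2 x) (DA2 x) (fst (mwgs (A2 x) (DA2 x))) (R2f (P x) (U x) (D x)) (DR2f (P x) (U x) (D x))" for x
    using mwgs_props[OF ok2[of x]] unfolding A2_def DA2_def R2f_def DR2f_def R1_def DR1_def by simp
  have cR2: "R2f (P x) (U x) (D x) \<in> carrier_mat (n+m) (n+m)" and cDR2: "DR2f (P x) (U x) (D x) \<in> carrier_mat (n+m) (n+m)"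
    and uR2: "unit_upper (R2f (P x) (U x) (D x))" and dgR2: "diagonal_mat (DR2f (P x) (U x) (D x))" for x
    using sp2[of x] carrier_matD[OF cA2[of x]] by (auto simp: mwgs_spec_def Let_def)
  have nn: "dim_row (R1f (P x) (U x) (D x)) = n" for x using cR1[of x] by simp
  have fUPu: "(\<lambda>x. o_UPu (ou x)) = (\<lambda>x. fst (split_block (R2f (P x) (U x) (D x)) n n))"
    and fK: "(\<lambda>x. o_K (ou x)) = (\<lambda>x. fst (snd (split_block (R2f (P x) (U x) (D x)) n n)))"
    and fURe: "(\<lambda>x. o_URe (ou x)) = (\<lambda>x. snd (snd (snd (split_block (R2f (P x) (U x) (D x)) n n))))"
    and fDPu: "(\<lambda>x. o_DPu (ou x)) = (\<lambda>x. fst (split_block (DR2f (P x) (U x) (D x)) n n))"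
    and fDRe: "(\<lambda>x. o_DRe (ou x)) = (\<lambda>x. snd (snd (snd (split_block (DR2f (P x) (U x) (D x)) n n))))"
    unfolding ou_def by (simp_all add: kf_step_fields nn)
  have cUPu: "o_UPu (ou x) \<in> carrier_mat n n" and cK: "o_K (ou x) \<in> carrier_mat n m"
    and cURe: "o_URe (ou x) \<in> carrier_mat m m" and cDPu: "o_DPu (ou x) \<in> carrier_mat n n"
    and cDRe: "o_DRe (ou x) \<in> carrier_mat m m" for x
    using fun_cong[OF fUPu, of x] fun_cong[OF fK, of x] fun_cong[OF fURe, of x] fun_cong[OF fDPu, of x] fun_cong[OF fDRe, of x]
      cR2[of x] cDR2[of x] by (auto simp: split_block_def Let_def)
  have df3': "mdiff (\<lambda>x. o_UPu (ou x)) n n x0" and df4': "mdiff (\<lambda>x. o_K (ou x)) n m x0"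
    and df5': "mdiff (\<lambda>x. o_URe (ou x)) m m x0" and df6': "mdiff (\<lambda>x. o_DPu (ou x)) n n x0"
    and df7': "mdiff (\<lambda>x. o_DRe (ou x)) m m x0"
    using df3 df4 df5 df6 df7 cUPu[of x0] cK[of x0] cURe[of x0] cDPu[of x0] cDRe[of x0] by (simp_all add: ou_def)
  obtain G3 where G3: "mD (\<lambda>x. o_UPu (ou x)) G3 n n x0" using mD_of_mdiff[OF cUPu df3'] by blast
  obtain G4 where G4: "mD (\<lambda>x. o_K (ou x)) G4 n m x0" using mD_of_mdiff[OF cK df4'] by blast
  obtain G5 where G5: "mD (\<lambda>x. o_URe (ou x)) G5 m m x0" using mD_of_mdiff[OF cURe df5'] by blast
  obtain G6 where G6: "mD (\<lambda>x. o_DPu (ou x)) G6 n n x0" using mD_of_mdiff[OF cDPu df6'] by blast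
  obtain G7 where G7: "mD (\<lambda>x. o_DRe (ou x)) G7 m m x0" using mD_of_mdiff[OF cDRe df7'] by blast
  have mR2: "mD (\<lambda>x. R2f (P x) (U x) (D x)) (four_block_mat G3 G4 (0\<^sub>m m n) G5) (n+m) (n+m) x0"
  proof -
    have e: "(\<lambda>x. R2f (P x) (U x) (D x)) = (\<lambda>x. four_block_mat (fst (split_block (R2f (P x) (U x) (D x)) n n))
       (fst (snd (split_block (R2f (P x) (U x) (D x)) n n))) (0\<^sub>m m n) (snd (snd (snd (split_block (R2f (P x) (U x) (D x)) n n)))))"
      using four_block_split[OF cR2] unit_upper_blocks(1)[OF cR2 uR2] by (intro ext) metis
    show ?thesis unfolding e using mD_four_block[OF G3[unfolded fUPu] G4[unfolded fK] mD_const G5[unfolded fURe]] by simp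
  qed
  have mDR2: "mD (\<lambda>x. DR2f (P x) (U x) (D x)) (four_block_mat G6 (0\<^sub>m n m) (0\<^sub>m m n) G7) (n+m) (n+m) x0"
  proof -
    have e: "(\<lambda>x. DR2f (P x) (U x) (D x)) = (\<lambda>x. four_block_mat (fst (split_block (DR2f (P x) (U x) (D x)) n n))
       (0\<^sub>m n m) (0\<^sub>m m n) (snd (snd (snd (split_block (DR2f (P x) (U x) (D x)) n n)))))"
      using four_block_split[OF cDR2] diag_blocks[OF cDR2 dgR2] by (intro ext) metis
    show ?thesis unfolding e using mD_four_block[OF G6[unfolded fDPu] mD_const mD_const G7[unfolded fDRe]] by simp
  qed
  have du2: "diff_ud (A2 x0) (DA2 x0) (dA2f (P x0) d (U x0) (D x0) dU dD) (bdiag (dDR1f (P x0) d (U x0) (D x0) dU dD) (pDH d))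
      = (four_block_mat G3 G4 (0\<^sub>m m n) G5, four_block_mat G6 (0\<^sub>m n m) (0\<^sub>m m n) G7)"
    by (rule diff_ud_correct[OF _ mA2 mDA2]) (use ok2 mR2 mDR2 in \<open>simp_all add: A2_def DA2_def R2f_def DR2f_def R1_def DR1_def\<close>)
  have eR2: "dR2f (P x0) d (U x0) (D x0) dU dD = four_block_mat G3 G4 (0\<^sub>m m n) G5"
    and eDR2: "dDR2f (P x0) d (U x0) (D x0) dU dD = four_block_mat G6 (0\<^sub>m n m) (0\<^sub>m m n) G7"
    using du2 unfolding dR2f_def dDR2f_def A2_def DA2_def R1_def DR1_def by simp_all
  have cG3: "G3 \<in> carrier_mat n n" and cG4: "G4 \<in> carrier_mat n m" and cG5: "G5 \<in> carrier_mat m m"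
    and cG6: "G6 \<in> carrier_mat n n" and cG7: "G7 \<in> carrier_mat m m"
    using G3 G4 G5 G6 G7 by (auto simp: mD_def)
  have nn0: "dim_row (R1f (P x0) (U x0) (D x0)) = n" by (rule nn)
  note DF = kf_dstep_fields[of "P x0" d y k "a x0" "U x0" "D x0" da dU dD, folded dou_def, unfolded nn0]
  note SF = kf_step_fields[of "P x0" y k "a x0" "U x0" "D x0"]
  have ou0: "kf_step (P x0) y k (a x0, U x0, D x0) = ou x0" by (simp add: ou_def)
  have dUPu: "d_UPu dou = G3" and dK: "d_K dou = G4" and dURe: "d_URe dou = G5"
    and dDPu: "d_DPu dou = G6" and dDRe: "d_DRe dou = G7"
    unfolding DF eR2 eDR2
    by (simp_all add: split_four_block[OF cG3 cG4 _ cG5] split_four_block[OF cG6 _ _ cG7])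
  have vap: "vD (\<lambda>x. o_apred (ou x)) (dapf (P x0) d y k (a x0) da) n x0"
    using vD_apf[OF model obs dT dB dZ dbeta dS dH sa] by (simp add: ou_def kf_step_fields)
  have cap: "o_apred (ou x) \<in> carrier_vec n" for x using vap by (simp add: vD_def)
  have cdap: "dapf (P x0) d y k (a x0) da \<in> carrier_vec n" using vap by (simp add: vD_def)
  have fe: "(\<lambda>x. o_e (ou x)) = (\<lambda>x. y (int k + 1) - pZ (P x) *\<^sub>v o_apred (ou x) - pbeta (P x) *\<^sub>v y (int k))"
    by (simp add: ou_def kf_step_fields)
  define w where "w = pZ d *\<^sub>v o_apred (ou x0) + pZ (P x0) *\<^sub>v dapf (P x0) d y k (a x0) da"
  define u where "u = pbeta d *\<^sub>v y (int k)"
  have ve: "vD (\<lambda>x. o_e (ou x)) (0\<^sub>v m - w - u) m x0"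
    unfolding fe w_def u_def
    by (rule vD_minus[OF vD_minus[OF vD_const[OF obs] vD_mult[OF dZ vap]] vD_mult_const[OF dbeta obs]])
  have uURe: "unit_upper (o_URe (ou x))" for x
    using fun_cong[OF fURe, of x] unit_upper_blocks(2)[OF cR2 uR2] by simp
  have detURe: "det (o_URe (ou x)) \<noteq> 0" for x using unit_upper_det[OF cURe uURe] by simp
  note Ui = minv_inverse[OF cURe detURe]
  have feb: "o_eb (ou x) = minv (o_URe (ou x)) *\<^sub>v o_e (ou x)" for x
    by (simp add: ou_def kf_step_fields)
  have ce: "o_e (ou x) \<in> carrier_vec m" for x using ve by (simp add: vD_def)
  have ceb: "o_eb (ou x) \<in> carrier_vec m" for x unfolding feb using Ui(1)[of x] ce[of x] by simp
  have df8': "vdiff (\<lambda>x. o_eb (ou x)) m x0" using df8 ceb[of x0] by (simp add: ou_def)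
  obtain G8 where G8: "vD (\<lambda>x. o_eb (ou x)) G8 m x0" using vD_of_vdiff[OF ceb df8'] by blast
  have cG8: "G8 \<in> carrier_vec m" using G8 by (simp add: vD_def)
  have rel: "(\<lambda>x. o_URe (ou x) *\<^sub>v o_eb (ou x)) = (\<lambda>x. o_e (ou x))"
  proof
    fix x
    have "o_URe (ou x) *\<^sub>v o_eb (ou x) = (o_URe (ou x) * minv (o_URe (ou x))) *\<^sub>v o_e (ou x)"
      unfolding feb using cURe[of x] Ui(1)[of x] ce[of x] by simp
    then show "o_URe (ou x) *\<^sub>v o_eb (ou x) = o_e (ou x)" using Ui(2)[of x] ce[of x] by simp
  qed
  have sumeq: "G5 *\<^sub>v o_eb (ou x0) + o_URe (ou x0) *\<^sub>v G8 = 0\<^sub>v m - w - u"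
    using vD_unique[OF vD_mult[OF G5 G8, unfolded rel] ve] .
  have cw: "w \<in> carrier_vec m" unfolding w_def using cdZ Dx(3)[of x0] cap[of x0] cdap by auto
  have cu: "u \<in> carrier_vec m" unfolding u_def using cdbeta obs by auto
  define Ui0 where "Ui0 = minv (o_URe (ou x0))"
  have cUi0: "Ui0 \<in> carrier_mat m m" unfolding Ui0_def by (rule Ui(1))
  have t1: "o_URe (ou x0) *\<^sub>v G8 = (-1) \<cdot>\<^sub>v (w + u) - G5 *\<^sub>v o_eb (ou x0)"
  proof (rule eq_vecI)
    fix i assume "i < dim_vec ((-1) \<cdot>\<^sub>v (w + u) - G5 *\<^sub>v o_eb (ou x0))"
    then have i: "i < m" using cu cG5 by simp
    have "(G5 *\<^sub>v o_eb (ou x0) + o_URe (ou x0) *\<^sub>v G8) $ i = (0\<^sub>v m - w - u) $ i" using sumeq by simp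
    then show "(o_URe (ou x0) *\<^sub>v G8) $ i = ((-1) \<cdot>\<^sub>v (w + u) - G5 *\<^sub>v o_eb (ou x0)) $ i"
      using i cG5 cURe[of x0] cw cu by simp
  qed (use cURe[of x0] cu cG5 in simp)
  have G8eq: "G8 = (-1) \<cdot>\<^sub>v (Ui0 *\<^sub>v (w + u)) - Ui0 *\<^sub>v (G5 *\<^sub>v o_eb (ou x0))"
  proof -
    have "G8 = (Ui0 * o_URe (ou x0)) *\<^sub>v G8" using Ui(3)[of x0] cG8 unfolding Ui0_def by simp
    also have "\<dots> = Ui0 *\<^sub>v (o_URe (ou x0) *\<^sub>v G8)" using cUi0 cURe[of x0] cG8 by simp
    also have "\<dots> = Ui0 *\<^sub>v ((-1) \<cdot>\<^sub>v (w + u)) - Ui0 *\<^sub>v (G5 *\<^sub>v o_eb (ou x0))"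
      unfolding t1 by (rule mult_minus_distrib_mat_vec[OF cUi0]) (use cw cu cG5 ceb[of x0] in auto)
    also have "Ui0 *\<^sub>v ((-1) \<cdot>\<^sub>v (w + u)) = (-1) \<cdot>\<^sub>v (Ui0 *\<^sub>v (w + u))"
      by (rule mult_mat_vec[OF cUi0]) (use cw cu in auto)
    finally show ?thesis .
  qed
  have deb: "d_eb dou = G8"
  proof -
    have "d_eb dou = (-1) \<cdot>\<^sub>v ((Ui0 * G5 * Ui0) *\<^sub>v o_e (ou x0)) - Ui0 *\<^sub>v (w + u)"
      unfolding DF(9) ou0 dURe Ui0_def w_def u_def ..
    also have "(Ui0 * G5 * Ui0) *\<^sub>v o_e (ou x0) = Ui0 *\<^sub>v (G5 *\<^sub>v o_eb (ou x0))"
    proof -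
      have "(Ui0 * G5 * Ui0) *\<^sub>v o_e (ou x0) = (Ui0 * G5) *\<^sub>v (Ui0 *\<^sub>v o_e (ou x0))"
        by (rule assoc_mult_mat_vec[OF mult_carrier_mat[OF cUi0 cG5] cUi0 ce[of x0]])
      also have "\<dots> = Ui0 *\<^sub>v (G5 *\<^sub>v (Ui0 *\<^sub>v o_e (ou x0)))"
        by (rule assoc_mult_mat_vec[OF cUi0 cG5 mult_mat_vec_carrier[OF cUi0 ce[of x0]]])
      finally show ?thesis using feb[of x0] unfolding Ui0_def by simp
    qed
    finally show ?thesis unfolding G8eq
      by (intro eq_vecI) (use cUi0 cw cu cG5 ceb[of x0] in auto)
  qed
  have faupd: "(\<lambda>x. o_aupd (ou x)) = (\<lambda>x. o_apred (ou x) + o_K (ou x) *\<^sub>v o_eb (ou x))"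
    by (simp add: ou_def kf_step_fields)
  have vau: "vD (\<lambda>x. o_aupd (ou x)) (dapf (P x0) d y k (a x0) da + (G4 *\<^sub>v o_eb (ou x0) + o_K (ou x0) *\<^sub>v G8)) n x0"
    unfolding faupd by (rule vD_add[OF vap vD_mult[OF G4 G8]])
  have dau: "d_aupd dou = dapf (P x0) d y k (a x0) da + (G4 *\<^sub>v o_eb (ou x0) + o_K (ou x0) *\<^sub>v G8)"
    unfolding DF(10) ou0 dK deb
    by (intro eq_vecI) (use cdap cG4 cK[of x0] ceb[of x0] cG8 in auto)
  have r1: "vD (\<lambda>x. o_apred (ou x)) (d_apred dou) n x0" unfolding DF using vap .
  have r2: "mD (\<lambda>x. o_UPp (ou x)) (d_UPp dou) n n x0" unfolding DF using mR1 by (simp add: ou_def kf_step_fields)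
  have r3: "mD (\<lambda>x. o_DPp (ou x)) (d_DPp dou) n n x0" unfolding DF using mDR1 by (simp add: ou_def kf_step_fields)
  show ?thesis using r1 r2 r3 G3 G4 G5 G6 G7 G8 vau
    unfolding dUPu dK dURe dDPu dDRe deb dau by simp
qed




lemma pderiv_mD: "mat_pderiv F \<theta> i G \<Longrightarrow> (\<And>t. F t \<in> carrier_mat nr nc) \<Longrightarrow> mD (\<lambda>x. F (\<theta>(i:=x))) G nr nc (\<theta> i)"
  unfolding mat_pderiv_def mD_def
  by (metis carrier_matD(1) carrier_matD(2))

lemma vpderiv_vD: "vec_pderiv F \<theta> i G \<Longrightarrow> (\<And>t. F t \<in> carrier_vec nr) \<Longrightarrow> vD (\<lambda>x. F (\<theta>(i:=x))) G nr (\<theta> i)"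
  unfolding vec_pderiv_def vD_def
  by (metis carrier_vecD)

lemma mD_pderiv: "mD (\<lambda>x. F (\<theta>(i:=x))) G nr nc (\<theta> i) \<Longrightarrow> mat_pderiv F \<theta> i G"
proof -
  assume A: "mD (\<lambda>x. F (\<theta>(i:=x))) G nr nc (\<theta> i)"
  then have c: "F \<theta> \<in> carrier_mat nr nc" unfolding mD_def by (metis fun_upd_triv)
  show ?thesis using A c unfolding mat_pderiv_def mD_def by auto
qed

lemma vD_vpderiv: "vD (\<lambda>x. F (\<theta>(i:=x))) G nr (\<theta> i) \<Longrightarrow> vec_pderiv F \<theta> i G"
proof -
  assume A: "vD (\<lambda>x. F (\<theta>(i:=x))) G nr (\<theta> i)"
  then have c: "F \<theta> \<in> carrier_vec nr" unfolding vD_def by (metis fun_upd_triv)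
  show ?thesis using A c unfolding vec_pderiv_def vD_def by auto
qed

lemma pdiff_mdiff: "mat_pdiff F \<theta> i \<Longrightarrow> mdiff (\<lambda>x. F (\<theta>(i:=x))) (dim_row (F \<theta>)) (dim_col (F \<theta>)) (\<theta> i)"
  unfolding mat_pdiff_def mat_pderiv_def mdiff_def real_differentiable_def by blast

lemma vpdiff_vdiff: "vec_pdiff F \<theta> i \<Longrightarrow> vdiff (\<lambda>x. F (\<theta>(i:=x))) (dim_vec (F \<theta>)) (\<theta> i)"
  unfolding vec_pdiff_def vec_pderiv_def vdiff_def real_differentiable_def by blast

theorem proposition3:
  fixes par :: "('p::finite \<Rightarrow> real) \<Rightarrow> kf_par"
    and y :: "int \<Rightarrow> real vec"
    and n m N :: nat
    and \<theta> :: "'p \<Rightarrow> real"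
    and i :: 'p
    and dpar :: kf_par
  assumes model: "\<forall>t. model_ok n m (par t)"
    and obs: "\<forall>k. y k \<in> carrier_vec m"
    and wd: "\<forall>t. mwgs_calls_ok (par t) y N"
    and dpar: "par_pderiv par \<theta> i dpar"
    and diff: "\<forall>k<N. kf_out_pdiff (\<lambda>t. kf_out (par t) y k) \<theta> i"
  shows "\<forall>k<N.
     vec_pderiv (\<lambda>t. o_apred (kf_out (par t) y k)) \<theta> i (d_apred (kf_dout (par \<theta>) dpar y k)) \<and>
     mat_pderiv (\<lambda>t. o_UPp (kf_out (par t) y k)) \<theta> i (d_UPp (kf_dout (par \<theta>) dpar y k)) \<and>
     mat_pderiv (\<lambda>t. o_DPp (kf_out (par t) y k)) \<theta> i (d_DPp (kf_dout (par \<theta>) dpar y k)) \<and>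
     mat_pderiv (\<lambda>t. o_UPu (kf_out (par t) y k)) \<theta> i (d_UPu (kf_dout (par \<theta>) dpar y k)) \<and>
     mat_pderiv (\<lambda>t. o_DPu (kf_out (par t) y k)) \<theta> i (d_DPu (kf_dout (par \<theta>) dpar y k)) \<and>
     mat_pderiv (\<lambda>t. o_URe (kf_out (par t) y k)) \<theta> i (d_URe (kf_dout (par \<theta>) dpar y k)) \<and>
     mat_pderiv (\<lambda>t. o_DRe (kf_out (par t) y k)) \<theta> i (d_DRe (kf_dout (par \<theta>) dpar y k)) \<and>
     mat_pderiv (\<lambda>t. o_K (kf_out (par t) y k)) \<theta> i (d_K (kf_dout (par \<theta>) dpar y k)) \<and>
     vec_pderiv (\<lambda>t. o_eb (kf_out (par t) y k)) \<theta> i (d_eb (kf_dout (par \<theta>) dpar y k)) \<and>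
     vec_pderiv (\<lambda>t. o_aupd (kf_out (par t) y k)) \<theta> i (d_aupd (kf_dout (par \<theta>) dpar y k))"
proof -
  define P where "P = (\<lambda>x. par (\<theta>(i := x)))"
  define x0 where "x0 = \<theta> i"
  have P0: "P x0 = par \<theta>" by (simp add: P_def x0_def)
  have modelP: "\<And>x. model_ok n m (P x)" using model by (simp add: P_def)
  note Dx = model_dims[OF modelP]
  have Dt: "\<And>t. model_ok n m (par t)" using model by simp
  note DT = model_dims[OF Dt]
  note dp = dpar[unfolded par_pderiv_def]
  have dT: "mD (\<lambda>x. pT (P x)) (pT dpar) n n x0" unfolding P_def x0_def by (rule pderiv_mD[OF conjunct1[OF dp] DT(1)])
  have dB: "mD (\<lambda>x. pB (P x)) (pB dpar) n m x0" unfolding P_def x0_def using dp by (intro pderiv_mD[OF _ DT(2)]) auto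
  have dZ: "mD (\<lambda>x. pZ (P x)) (pZ dpar) m n x0" unfolding P_def x0_def using dp by (intro pderiv_mD[OF _ DT(3)]) auto
  have dbeta: "mD (\<lambda>x. pbeta (P x)) (pbeta dpar) m m x0" unfolding P_def x0_def using dp by (intro pderiv_mD[OF _ DT(4)]) auto
  have dS: "mD (\<lambda>x. pS (P x)) (pS dpar) n m x0" unfolding P_def x0_def using dp by (intro pderiv_mD[OF _ DT(6)]) auto
  have dH: "mD (\<lambda>x. pH (P x)) (pH dpar) m m x0" unfolding P_def x0_def using dp by (intro pderiv_mD[OF _ DT(7)]) auto
  have dUH: "mD (\<lambda>x. pUH (P x)) (pUH dpar) m m x0" unfolding P_def x0_def using dp by (intro pderiv_mD[OF _ DT(13)]) auto
  have dDH: "mD (\<lambda>x. pDH (P x)) (pDH dpar) m m x0" unfolding P_def x0_def using dp by (intro pderiv_mD[OF _ DT(14)]) auto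
  have dUQ: "mD (\<lambda>x. pUQ (P x)) (pUQ dpar) n n x0" unfolding P_def x0_def using dp by (intro pderiv_mD[OF _ DT(15)]) auto
  have dDQ: "mD (\<lambda>x. pDQ (P x)) (pDQ dpar) n n x0" unfolding P_def x0_def using dp by (intro pderiv_mD[OF _ DT(16)]) auto
  have dUPi: "mD (\<lambda>x. pUPi (P x)) (pUPi dpar) n n x0" unfolding P_def x0_def using dp by (intro pderiv_mD[OF _ DT(17)]) auto
  have dDPi: "mD (\<lambda>x. pDPi (P x)) (pDPi dpar) n n x0" unfolding P_def x0_def using dp by (intro pderiv_mD[OF _ DT(18)]) auto
  have da0: "vD (\<lambda>x. pa0 (P x)) (pa0 dpar) n x0" unfolding P_def x0_def using dp by (intro vpderiv_vD[OF _ DT(8)]) auto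
  define S where "S k \<longleftrightarrow> vD (\<lambda>x. fst (kf_filt (P x) y k)) (fst (kf_dfilt (P x0) dpar y k)) n x0 \<and>
      mD (\<lambda>x. fst (snd (kf_filt (P x) y k))) (fst (snd (kf_dfilt (P x0) dpar y k))) n n x0 \<and>
      mD (\<lambda>x. snd (snd (kf_filt (P x) y k))) (snd (snd (kf_dfilt (P x0) dpar y k))) n n x0" for k
  define C where "C k \<longleftrightarrow> (let ou = (\<lambda>x. kf_out (P x) y k); dou = kf_dout (P x0) dpar y k in
     vD (\<lambda>x. o_apred (ou x)) (d_apred dou) n x0 \<and>
     mD (\<lambda>x. o_UPp (ou x)) (d_UPp dou) n n x0 \<and>
     mD (\<lambda>x. o_DPp (ou x)) (d_DPp dou) n n x0 \<and>
     mD (\<lambda>x. o_UPu (ou x)) (d_UPu dou) n n x0 \<and>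
     mD (\<lambda>x. o_DPu (ou x)) (d_DPu dou) n n x0 \<and>
     mD (\<lambda>x. o_URe (ou x)) (d_URe dou) m m x0 \<and>
     mD (\<lambda>x. o_DRe (ou x)) (d_DRe dou) m m x0 \<and>
     mD (\<lambda>x. o_K (ou x)) (d_K dou) n m x0 \<and>
     vD (\<lambda>x. o_eb (ou x)) (d_eb dou) m x0 \<and>
     vD (\<lambda>x. o_aupd (ou x)) (d_aupd dou) n x0)" for k
  have step: "C k" if k: "k < N" and Sk: "S k" for k
  proof -
    define a where "a = (\<lambda>x. fst (kf_filt (P x) y k))"
    define U where "U = (\<lambda>x. fst (snd (kf_filt (P x) y k)))"
    define D where "D = (\<lambda>x. snd (snd (kf_filt (P x) y k)))"
    define da where "da = fst (kf_dfilt (P x0) dpar y k)"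
    define dU where "dU = fst (snd (kf_dfilt (P x0) dpar y k))"
    define dD where "dD = snd (snd (kf_dfilt (P x0) dpar y k))"
    have filt: "kf_filt (P x) y k = (a x, U x, D x)" for x by (simp add: a_def U_def D_def)
    have dfilt: "kf_dfilt (P x0) dpar y k = (da, dU, dD)" by (simp add: da_def dU_def dD_def)
    have out: "kf_out (P x) y k = kf_step (P x) y k (a x, U x, D x)" for x by (simp add: kf_out_def filt)
    have outt: "kf_out (par (\<theta>(i := x))) y k = kf_step (P x) y k (a x, U x, D x)" for x
      using out[of x] by (simp add: P_def)
    have dout: "kf_dout (P x0) dpar y k = kf_dstep (P x0) dpar y k (a x0, U x0, D x0) (da, dU, dD)"
      by (simp add: kf_dout_def filt dfilt)
    have sa: "vD a da n x0" and sU: "mD U dU n n x0" and sD: "mD D dD n n x0"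
      using Sk unfolding S_def a_def U_def D_def da_def dU_def dD_def by blast+
    have okk: "mwgs_ok (pre1 (P x) (U x)) (bdiag (D x) (pDQ (P x))) \<and>
       mwgs_ok (pre2 (P x) (R1f (P x) (U x) (D x))) (bdiag (DR1f (P x) (U x) (D x)) (pDH (P x)))" for x
    proof -
      have "mwgs_calls_ok (P x) y N" unfolding P_def using wd by blast
      note this[unfolded mwgs_calls_ok_def, rule_format, OF k]
      then have "case kf_filt (P x) y k of (a, U, D) \<Rightarrow>
        mwgs_ok (pre1 (P x) U) (bdiag D (pDQ (P x))) \<and>
        (case mwgs (pre1 (P x) U) (bdiag D (pDQ (P x))) of (W1, R1, DR1) \<Rightarrow>
           mwgs_ok (pre2 (P x) R1) (bdiag DR1 (pDH (P x))))"
        .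
      then show ?thesis unfolding filt by (simp add: split_def R1f_def DR1f_def)
    qed
    have ok1: "\<And>x. mwgs_ok (pre1 (P x) (U x)) (bdiag (D x) (pDQ (P x)))" using okk by blast
    have ok2: "\<And>x. mwgs_ok (pre2 (P x) (R1f (P x) (U x) (D x))) (bdiag (DR1f (P x) (U x) (D x)) (pDH (P x)))" using okk by blast
    note pd = diff[rule_format, OF k, unfolded kf_out_pdiff_def]
    have th: "par \<theta> = P x0" "\<theta> i = x0" by (simp_all add: P_def x0_def)
    have df1: "mdiff (\<lambda>x. R1f (P x) (U x) (D x)) (dim_row (R1f (P x0) (U x0) (D x0))) (dim_col (R1f (P x0) (U x0) (D x0))) x0"
      using pdiff_mdiff[OF conjunct1[OF conjunct2[OF conjunct2[OF pd]]]] unfolding outt th out by (simp add: kf_step_fields)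
    have df2: "mdiff (\<lambda>x. DR1f (P x) (U x) (D x)) (dim_row (DR1f (P x0) (U x0) (D x0))) (dim_col (DR1f (P x0) (U x0) (D x0))) x0"
      using pd[THEN conjunct2, THEN conjunct2, THEN conjunct2, THEN conjunct1, THEN pdiff_mdiff] unfolding outt th out by (simp add: kf_step_fields)
    have df3: "mdiff (\<lambda>x. o_UPu (kf_step (P x) y k (a x, U x, D x))) (dim_row (o_UPu (kf_step (P x0) y k (a x0, U x0, D x0)))) (dim_col (o_UPu (kf_step (P x0) y k (a x0, U x0, D x0)))) x0"
      using pd[THEN conjunct2, THEN conjunct2, THEN conjunct2, THEN conjunct2, THEN conjunct2, THEN conjunct1, THEN pdiff_mdiff] unfolding outt th out .
    have df6: "mdiff (\<lambda>x. o_DPu (kf_step (P x) y k (a x, U x, D x))) (dim_row (o_DPu (kf_step (P x0) y k (a x0, U x0, D x0)))) (dim_col (o_DPu (kf_step (P x0) y k (a x0, U x0, D x0)))) x0"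
      using pd[THEN conjunct2, THEN conjunct2, THEN conjunct2, THEN conjunct2, THEN conjunct2, THEN conjunct2, THEN conjunct1, THEN pdiff_mdiff] unfolding outt th out .
    have df5: "mdiff (\<lambda>x. o_URe (kf_step (P x) y k (a x, U x, D x))) (dim_row (o_URe (kf_step (P x0) y k (a x0, U x0, D x0)))) (dim_col (o_URe (kf_step (P x0) y k (a x0, U x0, D x0)))) x0"
      using pd[THEN conjunct2, THEN conjunct2, THEN conjunct2, THEN conjunct2, THEN conjunct2, THEN conjunct2, THEN conjunct2, THEN conjunct1, THEN pdiff_mdiff] unfolding outt th out .
    have df7: "mdiff (\<lambda>x. o_DRe (kf_step (P x) y k (a x, U x, D x))) (dim_row (o_DRe (kf_step (P x0) y k (a x0, U x0, D x0)))) (dim_col (o_DRe (kf_step (P x0) y k (a x0, U x0, D x0)))) x0"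
      using pd[THEN conjunct2, THEN conjunct2, THEN conjunct2, THEN conjunct2, THEN conjunct2, THEN conjunct2, THEN conjunct2, THEN conjunct2, THEN conjunct1, THEN pdiff_mdiff] unfolding outt th out .
    have df4: "mdiff (\<lambda>x. o_K (kf_step (P x) y k (a x, U x, D x))) (dim_row (o_K (kf_step (P x0) y k (a x0, U x0, D x0)))) (dim_col (o_K (kf_step (P x0) y k (a x0, U x0, D x0)))) x0"
      using pd[THEN conjunct2, THEN conjunct2, THEN conjunct2, THEN conjunct2, THEN conjunct2, THEN conjunct2, THEN conjunct2, THEN conjunct2, THEN conjunct2, THEN conjunct1, THEN pdiff_mdiff] unfolding outt th out .
    have df8: "vdiff (\<lambda>x. o_eb (kf_step (P x) y k (a x, U x, D x))) (dim_vec (o_eb (kf_step (P x0) y k (a x0, U x0, D x0)))) x0"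
      using pd[THEN conjunct2, THEN conjunct2, THEN conjunct2, THEN conjunct2, THEN conjunct2, THEN conjunct2, THEN conjunct2, THEN conjunct2, THEN conjunct2, THEN conjunct2, THEN conjunct2, THEN conjunct1, THEN vpdiff_vdiff] unfolding outt th out .
    have obs': "\<And>j. y j \<in> carrier_vec m" using obs by blast
    note R = step_correct[OF modelP obs' dT dB dZ dbeta dS dH dUH dDH dUQ dDQ sa sU sD ok1 ok2 df1 df2 df3 df4 df5 df6 df7 df8]
    show ?thesis unfolding C_def Let_def out dout using R by simp
  qed
  have Sall: "k \<le> N \<Longrightarrow> S k" for k
  proof (induction k)
    case 0
    show ?case unfolding S_def using da0 dUPi dDPi by simp
  next
    case (Suc k)
    then have k: "k < N" by simp
    have Ck: "C k" using step[OF k Suc.IH] k by simp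
    show ?case using Ck unfolding S_def C_def Let_def kf_out_def kf_dout_def by (simp add: Let_def)
  qed
  show ?thesis
  proof (intro allI impI)
    fix k assume k: "k < N"
    have Ck: "C k" using step[OF k Sall] k by simp
    then show "vec_pderiv (\<lambda>t. o_apred (kf_out (par t) y k)) \<theta> i (d_apred (kf_dout (par \<theta>) dpar y k)) \<and>
     mat_pderiv (\<lambda>t. o_UPp (kf_out (par t) y k)) \<theta> i (d_UPp (kf_dout (par \<theta>) dpar y k)) \<and>
     mat_pderiv (\<lambda>t. o_DPp (kf_out (par t) y k)) \<theta> i (d_DPp (kf_dout (par \<theta>) dpar y k)) \<and>
     mat_pderiv (\<lambda>t. o_UPu (kf_out (par t) y k)) \<theta> i (d_UPu (kf_dout (par \<theta>) dpar y k)) \<and>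
     mat_pderiv (\<lambda>t. o_DPu (kf_out (par t) y k)) \<theta> i (d_DPu (kf_dout (par \<theta>) dpar y k)) \<and>
     mat_pderiv (\<lambda>t. o_URe (kf_out (par t) y k)) \<theta> i (d_URe (kf_dout (par \<theta>) dpar y k)) \<and>
     mat_pderiv (\<lambda>t. o_DRe (kf_out (par t) y k)) \<theta> i (d_DRe (kf_dout (par \<theta>) dpar y k)) \<and>
     mat_pderiv (\<lambda>t. o_K (kf_out (par t) y k)) \<theta> i (d_K (kf_dout (par \<theta>) dpar y k)) \<and>
     vec_pderiv (\<lambda>t. o_eb (kf_out (par t) y k)) \<theta> i (d_eb (kf_dout (par \<theta>) dpar y k)) \<and>
     vec_pderiv (\<lambda>t. o_aupd (kf_out (par t) y k)) \<theta> i (d_aupd (kf_dout (par \<theta>) dpar y k))"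
      unfolding C_def Let_def P_def x0_def
      by (simp only: fun_upd_triv) (intro conjI; rule mD_pderiv vD_vpderiv; blast)
  qed
qed


end
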